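(* Let $m\ge 0$ be an integer. For every $\boldsymbol v_h\in V_h$, \[ \sum_{e\in\mathcal{E}_h^b}\|h_K^{-1/2}T_1^m\boldsymbol v_h\|_{0,e}^2\lesssim \|\boldsymbol v_h\|_{0,\Omega_h}^2, \qquad \sum_{e\in\mathcal{E}_h^b}\|h_K^{-1/2}T^m\boldsymbol v_h\|_{0,e}^2\lesssim h^{-2}\|\boldsymbol v_h\|_{0,\Omega_h}^2 . \]
   Context: Let $\Omega\subset\mathbb{R}^2$ be a connected open set with Lipschitz boundary $\Gamma$, approximated by a polygonal domain $\Omega_h$ with boundary $\Gamma_h$. Let $\mathcal{T}_h$ be a triangulation of $\Omega_h$ that is shape-regular and quasi-uniform, and such that every mesh vertex lying on $\Gamma_h$ also lies on $\Gamma$; $h_K=\operatorname{diam}K$, $h=\max_K h_K$. $\mathcal{E}_h^b$ is the set of edges lying on $\Gamma_h$; for $e\in\mathcal{E}_h^b$, $h_K$ denotes the diameter of the triangle $K$ containing $e$. It is assumed that there is a map $M_h:\Gamma_h\to\Gamma$, $M_h(\boldsymbol x_h)=\boldsymbol x_h+\delta_h(\boldsymbol x_h)\boldsymbol\nu_h(\boldsymbol x_h)$, where $\boldsymbol\nu_h$ is a unit vector field on $\Gamma_h$ and $\delta_h(\boldsymbol x_h)=|M_h(\boldsymbol x_h)-\boldsymbol x_h|$, with $\delta:=\sup_{\Gamma_h}\delta_h\lesssim h^2$ and $\|\boldsymbol n\circ M_h-\boldsymbol n_h\|_{L^\infty(\Gamma_h)}\lesssim h$ ($\boldsymbol n$,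 $\boldsymbol n_h$ the unit outward normals on $\Gamma$, $\Gamma_h$). For a (piecewise) smooth vector field $\boldsymbol v$ and integer $m\ge0$, define on $\Gamma_h$: $T^m\boldsymbol v=\sum_{j=0}^m\frac{\delta_h^j}{j!}\partial_{\boldsymbol\nu_h}^j\boldsymbol v$ and $T_1^m\boldsymbol v=\sum_{j=1}^m\frac{\delta_h^j}{j!}\partial_{\boldsymbol\nu_h}^j\boldsymbol v$, where $\partial^j_{\boldsymbol\nu_h}$ is the $j$-th directional derivative in direction $\boldsymbol\nu_h$ (for a piecewise polynomial, the derivatives on $e$ are those of its polynomial restriction to the element containing $e$). For an integer $k\ge1$, $V_h=\{\boldsymbol v_h\in H(\mathrm{div},\Omega_h):\boldsymbol v_h|_K\in RT_k(K)\ \forall K\in\mathcal{T}_h\}$ with $RT_k(K)=\boldsymbol P_k(K)\oplus\boldsymbol xP_k(K)$. The notation $a\lesssim b$ means $a\le Cb$ with $C$ independent of $h$ and of the functions involved. *)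

theory Defs
  imports "HOL-Analysis.Analysis"
begin

type_synonym pt = "real \<times> real"

definition lipschitz_boundary :: "pt set \<Rightarrow> bool" where
  "lipschitz_boundary \<Omega> \<longleftrightarrow>
     (\<forall>x\<in>frontier \<Omega>. \<exists>r>0. \<exists>(R :: pt \<Rightarrow> pt) (g :: real \<Rightarrow> real) (L :: real).
        orthogonal_transformation R \<and> (\<forall>s t. \<bar>g s - g t\<bar> \<le> L * \<bar>s - t\<bar>) \<and>
        (\<forall>y\<in>ball x r. y \<in> \<Omega> \<longleftrightarrow> snd (R (y - x)) < g (fst (R (y - x)))))"

definition outward_normal :: "pt set \<Rightarrow> pt \<Rightarrow> pt \<Rightarrow> bool" where
  "outward_normal \<Omega> y n \<longleftrightarrow> norm n = 1 \<and>
     (\<forall>\<epsilon>>0. \<exists>r>0. \<forall>z\<in>ball y r.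
        ((z - y) \<bullet> n < - \<epsilon> * norm (z - y) \<longrightarrow> z \<in> \<Omega>) \<and>
        ((z - y) \<bullet> n > \<epsilon> * norm (z - y) \<longrightarrow> z \<notin> \<Omega>))"

definition verts :: "pt set \<Rightarrow> pt set" where
  "verts K = {x. x extreme_point_of K}"

definition is_triangle :: "pt set \<Rightarrow> bool" where
  "is_triangle K \<longleftrightarrow> (\<exists>a b c. \<not> collinear {a, b, c} \<and> K = convex hull {a, b, c})"

definition edges :: "pt set \<Rightarrow> pt set set" where
  "edges K = {closed_segment a b | a b. a \<in> verts K \<and> b \<in> verts K \<and> a \<noteq> b}"

definition diam :: "pt set \<Rightarrow> real" where
  "diam K = diameter K"

definition inradius :: "pt set \<Rightarrow> real" where
  "inradius K = Sup {r. \<exists>x. ball x r \<subseteq> K}"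

definition triangulation :: "pt set set \<Rightarrow> bool" where
  "triangulation \<T> \<longleftrightarrow> finite \<T> \<and> \<T> \<noteq> {} \<and> (\<forall>K\<in>\<T>. is_triangle K) \<and>
     (\<forall>K\<in>\<T>. \<forall>K'\<in>\<T>. K \<noteq> K' \<longrightarrow>
        K \<inter> K' = {} \<or> (\<exists>v\<in>verts K \<inter> verts K'. K \<inter> K' = {v}) \<or>
        (\<exists>e\<in>edges K \<inter> edges K'. K \<inter> K' = e))"

definition dom_h :: "pt set set \<Rightarrow> pt set" where
  "dom_h \<T> = interior (\<Union>\<T>)"

definition bdry_h :: "pt set set \<Rightarrow> pt set" where
  "bdry_h \<T> = frontier (dom_h \<T>)"

definition meshsize :: "pt set set \<Rightarrow> real" where
  "meshsize \<T> = Max (diam ` \<T>)"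

definition bedges :: "pt set set \<Rightarrow> (pt set \<times> pt set) set" where
  "bedges \<T> = {(K, e). K \<in> \<T> \<and> e \<in> edges K \<and> e \<subseteq> bdry_h \<T>}"

definition edge_normal :: "pt set \<Rightarrow> pt set \<Rightarrow> pt" where
  "edge_normal K e = (SOME n. norm n = 1 \<and> (\<forall>x\<in>e. \<forall>y\<in>e. (y - x) \<bullet> n = 0) \<and>
                            (\<forall>z\<in>K. \<forall>x\<in>e. (z - x) \<bullet> n \<le> 0))"

definition edge_int :: "pt set \<Rightarrow> (pt \<Rightarrow> real) \<Rightarrow> ennreal" where
  "edge_int e f = (let (a, b) = (SOME (a, b). a \<noteq> b \<and> e = closed_segment a b) in
      ennreal (dist a b) * (\<integral>\<^sup>+ t\<in>{0..1}. ennreal (f (a + t *\<^sub>R (b - a))) \<partial>lborel))"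

definition ae_edge :: "pt set \<Rightarrow> (pt \<Rightarrow> bool) \<Rightarrow> bool" where
  "ae_edge e P = (let (a, b) = (SOME (a, b). a \<noteq> b \<and> e = closed_segment a b) in
      (AE t in lebesgue_on {0..1}. P (a + t *\<^sub>R (b - a))))"

definition poly2 :: "nat \<Rightarrow> (pt \<Rightarrow> real) \<Rightarrow> bool" where
  "poly2 k p \<longleftrightarrow> (\<exists>c :: nat \<Rightarrow> nat \<Rightarrow> real. \<forall>x.
      p x = (\<Sum>i\<le>k. \<Sum>j\<le>k - i. c i j * fst x ^ i * snd x ^ j))"

text \<open>RT_k = P_k^2 + x P_k (as polynomial vector fields on the whole plane).\<close>
definition RT :: "nat \<Rightarrow> (pt \<Rightarrow> pt) \<Rightarrow> bool" where
  "RT k v \<longleftrightarrow> (\<exists>p1 p2 q. poly2 k p1 \<and> poly2 k p2 \<and> poly2 k q \<and>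
      (\<forall>x. v x = (p1 x + fst x * q x, p2 x + snd x * q x)))"

definition dirderiv :: "nat \<Rightarrow> pt \<Rightarrow> (pt \<Rightarrow> pt) \<Rightarrow> pt \<Rightarrow> pt" where
  "dirderiv j d v x = ((deriv ^^ j) (\<lambda>t. fst (v (x + t *\<^sub>R d))) 0,
                       (deriv ^^ j) (\<lambda>t. snd (v (x + t *\<^sub>R d))) 0)"

primrec iter_dd :: "pt list \<Rightarrow> (pt \<Rightarrow> real) \<Rightarrow> pt \<Rightarrow> real" where
  "iter_dd [] \<phi> = \<phi>"
| "iter_dd (d # ds) \<phi> = (\<lambda>x. frechet_derivative (iter_dd ds \<phi>) (at x) d)"

definition smooth_fun :: "(pt \<Rightarrow> real) \<Rightarrow> bool" where
  "smooth_fun \<phi> \<longleftrightarrow> (\<forall>ds x. iter_dd ds \<phi> differentiable (at x))"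

definition test_fun :: "pt set \<Rightarrow> (pt \<Rightarrow> real) \<Rightarrow> bool" where
  "test_fun U \<phi> \<longleftrightarrow> smooth_fun \<phi> \<and> (\<exists>S. compact S \<and> S \<subseteq> U \<and> (\<forall>x. x \<notin> S \<longrightarrow> \<phi> x = 0))"

definition grad :: "(pt \<Rightarrow> real) \<Rightarrow> pt \<Rightarrow> pt" where
  "grad \<phi> x = (frechet_derivative \<phi> (at x) (1, 0), frechet_derivative \<phi> (at x) (0, 1))"

definition L2_on :: "pt set \<Rightarrow> (pt \<Rightarrow> 'a::euclidean_space) \<Rightarrow> bool" where
  "L2_on U v \<longleftrightarrow> (\<lambda>x. indicator U x *\<^sub>R v x) \<in> borel_measurable lborel \<and>
                 set_integrable lborel U (\<lambda>x. norm (v x) ^ 2)"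

definition Hdiv :: "pt set \<Rightarrow> (pt \<Rightarrow> pt) \<Rightarrow> bool" where
  "Hdiv U v \<longleftrightarrow> L2_on U v \<and> (\<exists>w :: pt \<Rightarrow> real. L2_on U w \<and>
     (\<forall>\<phi>. test_fun U \<phi> \<longrightarrow> (LINT x:U|lborel. v x \<bullet> grad \<phi> x + w x * \<phi> x) = 0))"

text \<open>A discrete field is given elementwise: V K is the RT_k polynomial on K.
  The global field takes on each point the value of (some) element containing it.\<close>
definition glob :: "pt set set \<Rightarrow> (pt set \<Rightarrow> pt \<Rightarrow> pt) \<Rightarrow> pt \<Rightarrow> pt" where
  "glob \<T> V x = V (SOME K. K \<in> \<T> \<and> x \<in> K) x"

definition Vh :: "nat \<Rightarrow> pt set set \<Rightarrow> (pt set \<Rightarrow> pt \<Rightarrow> pt) set" where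
  "Vh k \<T> = {V. (\<forall>K\<in>\<T>. RT k (V K)) \<and> Hdiv (dom_h \<T>) (glob \<T> V)}"

definition Tm :: "nat \<Rightarrow> nat \<Rightarrow> (pt \<Rightarrow> pt) \<Rightarrow> (pt \<Rightarrow> pt) \<Rightarrow> (pt \<Rightarrow> pt) \<Rightarrow> pt \<Rightarrow> pt" where
  "Tm j0 m Mh \<nu> v x =
     (\<Sum>j=j0..m. (norm (Mh x - x) ^ j / fact j) *\<^sub>R dirderiv j (\<nu> x) v x)"

definition admissible ::
  "pt set \<Rightarrow> real \<Rightarrow> real \<Rightarrow> real \<Rightarrow> real \<Rightarrow> pt set set \<Rightarrow> (pt \<Rightarrow> pt) \<Rightarrow> (pt \<Rightarrow> pt) \<Rightarrow> bool" where
  "admissible \<Omega> \<sigma> \<rho> C\<delta> Cn \<T> Mh \<nu> \<longleftrightarrow>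
     triangulation \<T> \<and> open (dom_h \<T>) \<and> connected (dom_h \<T>) \<and>
     (\<forall>K\<in>\<T>. diam K \<le> \<sigma> * inradius K) \<and>
     (\<forall>K\<in>\<T>. meshsize \<T> \<le> \<rho> * diam K) \<and>
     (\<forall>K\<in>\<T>. \<forall>v\<in>verts K. v \<in> bdry_h \<T> \<longrightarrow> v \<in> frontier \<Omega>) \<and>
     Mh \<in> borel_measurable borel \<and> \<nu> \<in> borel_measurable borel \<and>
     (\<forall>x\<in>bdry_h \<T>. Mh x \<in> frontier \<Omega> \<and> norm (\<nu> x) = 1 \<and>
                       Mh x = x + norm (Mh x - x) *\<^sub>R \<nu> x \<and>
                       norm (Mh x - x) \<le> C\<delta> * meshsize \<T> ^ 2) \<and>
     (\<forall>(K, e)\<in>bedges \<T>. ae_edge e (\<lambda>x. \<exists>n. outward_normal \<Omega> (Mh x) n \<and>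
                            norm (n - edge_normal K e) \<le> Cn * meshsize \<T>))"

end

theory Submission
  imports Defs "HOL-Computational_Algebra.Polynomial"
begin

definition IX :: "nat \<Rightarrow> (nat \<times> nat) set" where "IX N = {..N} \<times> {..N}"

definition ev :: "nat \<Rightarrow> (nat \<times> nat \<Rightarrow> real) \<Rightarrow> pt \<Rightarrow> real" where
  "ev N c y = (\<Sum>ab\<in>IX N. c ab * fst y ^ fst ab * snd y ^ snd ab)"

definition l1 :: "nat \<Rightarrow> (nat \<times> nat \<Rightarrow> real) \<Rightarrow> real" where
  "l1 N c = (\<Sum>ab\<in>IX N. \<bar>c ab\<bar>)"

definition GG :: "nat \<Rightarrow> (nat \<times> nat \<Rightarrow> real) \<Rightarrow> ennreal" where
  "GG N c = (\<integral>\<^sup>+ y\<in>cball 0 1. ennreal ((ev N c y)\<^sup>2) \<partial>lborel)"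

lemma finite_IX[simp]: "finite (IX N)" by (simp add: IX_def)

lemma uni0:
  fixes d :: "nat \<Rightarrow> real"
  assumes "\<And>x. \<bar>x\<bar> < 1/2 \<Longrightarrow> (\<Sum>i\<le>N. d i * x ^ i) = 0" "i \<le> N"
  shows "d i = 0"
proof -
  define P where "P = (\<Sum>i\<le>N. monom (d i) i)"
  have ev: "poly P x = (\<Sum>i\<le>N. d i * x ^ i)" for x
    by (simp add: P_def poly_sum poly_monom)
  have "P = 0"
  proof (rule ccontr)
    assume "P \<noteq> 0"
    then have "finite {x. poly P x = 0}" by (rule poly_roots_finite)
    moreover have "{-1/2<..<1/2::real} \<subseteq> {x. poly P x = 0}"
      using assms(1) by (auto simp: ev)
    ultimately have "finite {-1/2<..<1/2::real}" by (rule finite_subset[rotated])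
    then show False using infinite_Ioo[of "-1/2" "1/2::real"] by simp
  qed
  have "coeff P i = d i" using assms(2)
    by (simp add: P_def coeff_sum)
  then show ?thesis using \<open>P = 0\<close> by simp
qed

lemma sum_IX: "(\<Sum>ab\<in>IX N. f ab) = (\<Sum>a\<le>N. \<Sum>b\<le>N. f (a,b))"
  unfolding IX_def by (simp add: sum.cartesian_product)

lemma ev_split: "ev N c (x, y) = (\<Sum>a\<le>N. (\<Sum>b\<le>N. c (a, b) * y ^ b) * x ^ a)"
  unfolding ev_def sum_IX
  by (simp add: sum_distrib_left sum_distrib_right mult_ac)

lemma sq_lt: "\<bar>x::real\<bar> < a \<Longrightarrow> x^2 < a^2"
  by (metis abs_ge_zero power2_abs power_strict_mono zero_less_numeral)

lemma ev_zero_imp: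
  assumes "\<forall>y\<in>ball 0 1. ev N c y = 0" "ab \<in> IX N"
  shows "c ab = 0"
proof -
  obtain a b where ab: "ab = (a, b)" "a \<le> N" "b \<le> N" using assms(2) by (auto simp: IX_def)
  have inner: "(\<Sum>b\<le>N. c (a, b) * y ^ b) = 0" if "\<bar>y\<bar> < 1/2" for y
  proof (rule uni0[where N=N and d="\<lambda>a. \<Sum>b\<le>N. c (a, b) * y ^ b"])
    fix x :: real assume "\<bar>x\<bar> < 1/2"
    have "norm (x, y) < 1"
    proof -
      have "norm (x,y) = sqrt (x^2 + y^2)" by (simp add: norm_Pair)
      also have "x^2 + y^2 < 1"
      proof -
        have "x^2 < 1/4" using sq_lt[OF \<open>\<bar>x\<bar> < 1/2\<close>] by (simp add: power_divide)
        moreover have "y^2 < 1/4" using sq_lt[OF \<open>\<bar>y\<bar> < 1/2\<close>] by (simp add: power_divide)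
        ultimately show ?thesis by simp
      qed
      then have "sqrt (x^2+y^2) < 1" by simp
      finally show ?thesis .
    qed
    then have "ev N c (x, y) = 0" using assms(1) by simp
    then show "(\<Sum>a\<le>N. (\<Sum>b\<le>N. c (a, b) * y ^ b) * x ^ a) = 0" by (simp add: ev_split)
  qed (use ab in auto)
  have "c (a, b) = 0"
    by (rule uni0[where N=N and d="\<lambda>b. c (a, b)"]) (use inner ab in \<open>auto simp: mult.commute\<close>)
  then show ?thesis using ab by simp
qed

lemma cont_ev[continuous_intros]: "continuous_on S (ev N c)"
  unfolding ev_def by (intro continuous_intros)

lemma meas_ev[measurable]: "ev N c \<in> borel_measurable borel"
  by (intro borel_measurable_continuous_onI cont_ev)

lemma GG_pos:
  assumes "y0 \<in> ball 0 1" "ev N c y0 \<noteq> 0"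
  shows "GG N c > 0"
proof -
  let ?\<eta> = "ev N c y0"
  have "isCont (ev N c) y0" by (rule continuous_on_interior[OF cont_ev[of UNIV]]) simp
  moreover have "\<bar>?\<eta>\<bar>/2 > 0" using assms(2) by simp
  ultimately obtain d where d: "d > 0" "\<And>y. dist y y0 < d \<Longrightarrow> dist (ev N c y) ?\<eta> < \<bar>?\<eta>\<bar>/2"
    unfolding continuous_at_eps_delta by blast
  define \<epsilon> where "\<epsilon> = min d (1 - norm y0)"
  have ep: "\<epsilon> > 0" using d assms(1) by (auto simp: \<epsilon>_def)
  have sub: "ball y0 \<epsilon> \<subseteq> cball 0 1"
  proof
    fix y assume "y \<in> ball y0 \<epsilon>"
    then have "dist y0 y < 1 - norm y0" by (simp add: \<epsilon>_def)
    moreover have "norm y \<le> norm y0 + norm (y0 - y)"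
      using norm_triangle_ineq4[of y0 "y0 - y"] by simp
    ultimately show "y \<in> cball 0 1" by (simp add: dist_norm)
  qed
  have low: "?\<eta>\<^sup>2/4 \<le> (ev N c y)\<^sup>2" if "y \<in> ball y0 \<epsilon>" for y
  proof -
    have "dist y y0 < d" using that by (simp add: \<epsilon>_def dist_commute)
    then have "\<bar>ev N c y - ?\<eta>\<bar> < \<bar>?\<eta>\<bar>/2" using d(2) by (simp add: dist_real_def)
    then have "\<bar>?\<eta>\<bar>/2 \<le> \<bar>ev N c y\<bar>" by linarith
    then have "(\<bar>?\<eta>\<bar>/2)\<^sup>2 \<le> \<bar>ev N c y\<bar>\<^sup>2" by (rule power_mono) simp
    then show ?thesis by (simp add: power_divide)
  qed
  have "(\<integral>\<^sup>+ y\<in>ball y0 \<epsilon>. ennreal (?\<eta>\<^sup>2/4) \<partial>lborel) \<le> GG N c"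
    unfolding GG_def
    by (intro nn_integral_mono) (use sub low in \<open>auto split: split_indicator intro!: ennreal_leI\<close>)
  moreover have "(\<integral>\<^sup>+ y\<in>ball y0 \<epsilon>. ennreal (?\<eta>\<^sup>2/4) \<partial>lborel) = ennreal (?\<eta>\<^sup>2/4) * emeasure lborel (ball y0 \<epsilon>)"
    by (simp add: nn_integral_cmult_indicator)
  moreover have "emeasure lborel (ball y0 \<epsilon>) > 0"
    using ep by (simp add: emeasure_ball)
  moreover have "ennreal (?\<eta>\<^sup>2/4) > 0" using assms(2) by simp
  ultimately show ?thesis
    by (metis (no_types, lifting) dual_order.strict_trans1 mult_pos_pos ennreal_zero_less_mult_iff)
qed

lemma sq_split: "(a::real)\<^sup>2 \<le> 2 * b\<^sup>2 + 2 * (a - b)\<^sup>2"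
proof -
  have "0 \<le> (a - 2 * b)\<^sup>2" by simp
  moreover have "(a - 2 * b)\<^sup>2 = a\<^sup>2 - 4 * (a * b) + 4 * b\<^sup>2" by (simp add: power2_eq_square algebra_simps)
  moreover have "(a - b)\<^sup>2 = a\<^sup>2 - 2 * (a * b) + b\<^sup>2" by (simp add: power2_eq_square algebra_simps)
  ultimately show ?thesis by linarith
qed

lemma meas_cball[measurable]: "cball (x::pt) r \<in> sets borel"
  by (simp add: borel_closed)

lemma ev_scale: "ev N (\<lambda>ab. t * c ab) y = t * ev N c y"
  unfolding ev_def by (simp add: sum_distrib_left mult_ac)

lemma l1_scale: "l1 N (\<lambda>ab. t * c ab) = \<bar>t\<bar> * l1 N c"
  unfolding l1_def by (simp add: sum_distrib_left abs_mult)

lemma GG_scale: "GG N (\<lambda>ab. t * c ab) = ennreal (t\<^sup>2) * GG N c"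
proof -
  have "GG N (\<lambda>ab. t * c ab) = (\<integral>\<^sup>+ y. ennreal (t\<^sup>2) * (ennreal ((ev N c y)\<^sup>2) * indicator (cball 0 1) y) \<partial>lborel)"
    unfolding GG_def ev_scale
    by (intro nn_integral_cong) (simp add: power_mult_distrib ennreal_mult mult_ac)
  also have "\<dots> = ennreal (t\<^sup>2) * GG N c"
    unfolding GG_def by (rule nn_integral_cmult) measurable
  finally show ?thesis .
qed

lemma bw_fin:
  fixes f :: "nat \<Rightarrow> 'i \<Rightarrow> real"
  assumes "finite I" "\<And>n i. i \<in> I \<Longrightarrow> \<bar>f n i\<bar> \<le> B"
  shows "\<exists>s g. strict_mono s \<and> (\<forall>i\<in>I. (\<lambda>n. f (s n) i) \<longlonglongrightarrow> g i)"
  using assms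
proof (induction I rule: finite_induct)
  case empty
  show ?case by (rule exI[of _ id]) (auto simp: strict_mono_def)
next
  case (insert i I)
  then obtain s g where sg: "strict_mono s" "\<forall>j\<in>I. (\<lambda>n. f (s n) j) \<longlonglongrightarrow> g j" by blast
  have "bounded (range (\<lambda>n. f (s n) i))"
    unfolding bounded_iff using insert.prems by auto
  then obtain l r where lr: "strict_mono r" "((\<lambda>n. f (s n) i) \<circ> r) \<longlonglongrightarrow> l"
    using bounded_imp_convergent_subsequence by blast
  have "\<forall>j\<in>insert i I. (\<lambda>n. f ((s \<circ> r) n) j) \<longlonglongrightarrow> (g(i := l)) j"
  proof
    fix j assume j: "j \<in> insert i I"
    show "(\<lambda>n. f ((s \<circ> r) n) j) \<longlonglongrightarrow> (g(i := l)) j"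
    proof (cases "j = i")
      case True then show ?thesis using lr by (simp add: comp_def)
    next
      case False
      then have "j \<in> I" using j by simp
      then have "((\<lambda>n. f (s n) j) \<circ> r) \<longlonglongrightarrow> g j" using sg lr by (intro LIMSEQ_subseq_LIMSEQ) auto
      then show ?thesis using False by (simp add: comp_def)
    qed
  qed
  moreover have "strict_mono (s \<circ> r)" using sg lr by (intro strict_mono_o)
  ultimately show ?case by blast
qed

lemma ev_diff_bound:
  assumes "y \<in> cball 0 1"
  shows "\<bar>ev N g y - ev N d y\<bar> \<le> l1 N (\<lambda>ab. g ab - d ab)"
proof -
  have f: "\<bar>fst y\<bar> \<le> 1" "\<bar>snd y\<bar> \<le> 1"
    using assms norm_fst_le[of "fst y" "snd y"] norm_snd_le[of "snd y" "fst y"] by auto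
  have "ev N g y - ev N d y = (\<Sum>ab\<in>IX N. (g ab - d ab) * fst y ^ fst ab * snd y ^ snd ab)"
    unfolding ev_def by (simp add: sum_subtractf[symmetric] algebra_simps)
  also have "\<bar>\<dots>\<bar> \<le> (\<Sum>ab\<in>IX N. \<bar>(g ab - d ab) * fst y ^ fst ab * snd y ^ snd ab\<bar>)"
    by (rule sum_abs)
  also have "\<dots> \<le> (\<Sum>ab\<in>IX N. \<bar>g ab - d ab\<bar>)"
  proof (rule sum_mono)
    fix ab
    have "\<bar>fst y ^ fst ab\<bar> \<le> 1" "\<bar>snd y ^ snd ab\<bar> \<le> 1"
      using f by (auto simp: power_abs intro!: power_le_one)
    then have "\<bar>fst y ^ fst ab * snd y ^ snd ab\<bar> \<le> 1"
      by (simp add: abs_mult mult_le_one)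
    then show "\<bar>(g ab - d ab) * fst y ^ fst ab * snd y ^ snd ab\<bar> \<le> \<bar>g ab - d ab\<bar>"
      by (simp add: abs_mult mult.assoc mult_left_le)
  qed
  finally show ?thesis by (simp add: l1_def)
qed

lemma NE: "\<exists>lam>0. \<forall>c. ennreal (lam * (l1 N c)\<^sup>2) \<le> GG N c"
proof (rule ccontr)
  assume "\<not> ?thesis"
  then have H: "\<And>lam. lam > 0 \<Longrightarrow> \<exists>c. GG N c < ennreal (lam * (l1 N c)\<^sup>2)"
    by (auto simp: not_le)
  have "\<exists>d. l1 N d = 1 \<and> GG N d < ennreal (1 / real (Suc n))" for n
  proof -
    obtain c where c: "GG N c < ennreal (1 / real (Suc n) * (l1 N c)\<^sup>2)"
      using H[of "1 / real (Suc n)"] by auto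
    have "l1 N c \<noteq> 0"
    proof
      assume "l1 N c = 0" then show False using c by simp
    qed
    moreover have "l1 N c \<ge> 0" unfolding l1_def by (simp add: sum_nonneg)
    ultimately have lp: "l1 N c > 0" by simp
    define d where "d = (\<lambda>ab. (1 / l1 N c) * c ab)"
    have "l1 N d = \<bar>1 / l1 N c\<bar> * l1 N c" unfolding d_def by (rule l1_scale)
    then have "l1 N d = 1" using lp by simp
    moreover have "GG N d < ennreal (1 / real (Suc n))"
    proof -
      have "GG N d = ennreal ((1 / l1 N c)\<^sup>2) * GG N c" unfolding d_def by (rule GG_scale)
      also have "\<dots> < ennreal ((1 / l1 N c)\<^sup>2) * ennreal (1 / real (Suc n) * (l1 N c)\<^sup>2)"
        using lp c by (intro ennreal_mult_strict_left_mono) auto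
      also have "\<dots> = ennreal (1 / real (Suc n))"
        using lp by (simp add: ennreal_mult[symmetric] power_divide field_simps)
      finally show ?thesis .
    qed
    ultimately show ?thesis by blast
  qed
  then obtain D where D: "\<And>n. l1 N (D n) = 1" "\<And>n. GG N (D n) < ennreal (1 / real (Suc n))"
    by metis
  have Db: "\<bar>D n ab\<bar> \<le> 1" if "ab \<in> IX N" for n ab
  proof -
    have "\<bar>D n ab\<bar> \<le> l1 N (D n)" unfolding l1_def
      by (rule member_le_sum[where f="\<lambda>ab. \<bar>D n ab\<bar>"]) (use that in auto)
    then show ?thesis using D(1) by simp
  qed
  obtain s g where sg: "strict_mono s" "\<forall>ab\<in>IX N. (\<lambda>n. D (s n) ab) \<longlonglongrightarrow> g ab"
    using bw_fin[of "IX N" D 1, OF finite_IX Db] by blast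
  have "(\<lambda>n. l1 N (D (s n))) \<longlonglongrightarrow> l1 N g"
    unfolding l1_def using sg(2) by (intro tendsto_sum tendsto_rabs) auto
  then have lg: "l1 N g = 1" using D(1) by (simp add: LIMSEQ_const_iff)
  define \<epsilon> where "\<epsilon> n = l1 N (\<lambda>ab. g ab - D (s n) ab)" for n
  have e0: "\<epsilon> \<longlonglongrightarrow> 0"
  proof -
    have "(\<lambda>n. \<Sum>ab\<in>IX N. \<bar>g ab - D (s n) ab\<bar>) \<longlonglongrightarrow> (\<Sum>ab\<in>IX N. \<bar>g ab - g ab\<bar>)"
      using sg(2) by (intro tendsto_sum tendsto_rabs tendsto_diff tendsto_const) auto
    then show ?thesis unfolding \<epsilon>_def l1_def by simp
  qed
  define \<mu> where "\<mu> = measure lborel (cball (0::pt) 1)"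
  have em: "emeasure lborel (cball (0::pt) 1) = ennreal \<mu>"
    unfolding \<mu>_def using emeasure_lborel_cball_finite[of "0::pt" 1] by (intro emeasure_eq_ennreal_measure) auto
  have bnd: "GG N g \<le> ennreal (2 / real (Suc n) + 2 * (\<epsilon> n)\<^sup>2 * \<mu>)" for n
  proof -
    have pt: "(ev N g y)\<^sup>2 \<le> 2 * (ev N (D (s n)) y)\<^sup>2 + 2 * (\<epsilon> n)\<^sup>2" if "y \<in> cball 0 1" for y
    proof -
      have "\<bar>ev N g y - ev N (D (s n)) y\<bar> \<le> \<epsilon> n" unfolding \<epsilon>_def by (rule ev_diff_bound[OF that])
      then have "(ev N g y - ev N (D (s n)) y)\<^sup>2 \<le> (\<epsilon> n)\<^sup>2"
        by (metis abs_ge_zero power2_abs power_mono)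
      moreover have "(ev N g y)\<^sup>2 \<le> 2 * (ev N (D (s n)) y)\<^sup>2 + 2 * (ev N g y - ev N (D (s n)) y)\<^sup>2"
        by (rule sq_split)
      ultimately show ?thesis by linarith
    qed
    have A: "(\<integral>\<^sup>+ y. ennreal (2 * (ev N (D (s n)) y)\<^sup>2) * indicator (cball 0 1) y \<partial>lborel) = (\<integral>\<^sup>+ y. ennreal 2 * (ennreal ((ev N (D (s n)) y)\<^sup>2) * indicator (cball 0 1) y) \<partial>lborel)"
      by (intro nn_integral_cong) (simp add: ennreal_mult mult.assoc)
    have A2: "\<dots> = ennreal 2 * GG N (D (s n))"
      unfolding GG_def by (rule nn_integral_cmult) measurable
    have B: "(\<integral>\<^sup>+ y. ennreal (2 * (\<epsilon> n)\<^sup>2) * indicator (cball (0::pt) 1) y \<partial>lborel) = ennreal (2 * (\<epsilon> n)\<^sup>2) * ennreal \<mu>"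
      by (subst nn_integral_cmult_indicator) (auto simp: em)
    have "GG N g \<le> (\<integral>\<^sup>+ y. ennreal (2 * (ev N (D (s n)) y)\<^sup>2) * indicator (cball 0 1) y + ennreal (2 * (\<epsilon> n)\<^sup>2) * indicator (cball 0 1) y \<partial>lborel)"
      unfolding GG_def using pt
      by (intro nn_integral_mono) (auto split: split_indicator simp: ennreal_plus[symmetric] simp del: ennreal_plus intro!: ennreal_leI)
    also have "\<dots> = (\<integral>\<^sup>+ y. ennreal (2 * (ev N (D (s n)) y)\<^sup>2) * indicator (cball 0 1) y \<partial>lborel) + (\<integral>\<^sup>+ y. ennreal (2 * (\<epsilon> n)\<^sup>2) * indicator (cball (0::pt) 1) y \<partial>lborel)"
      by (rule nn_integral_add) measurable
    also have "(\<integral>\<^sup>+ y. ennreal (2 * (ev N (D (s n)) y)\<^sup>2) * indicator (cball 0 1) y \<partial>lborel) + (\<integral>\<^sup>+ y. ennreal (2 * (\<epsilon> n)\<^sup>2) * indicator (cball (0::pt) 1) y \<partial>lborel) = ennreal 2 * GG N (D (s n)) + ennreal (2 * (\<epsilon> n)\<^sup>2) * ennreal \<mu>"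
      using A A2 B by simp
    also have "\<dots> \<le> ennreal 2 * ennreal (1 / real (Suc n)) + ennreal (2 * (\<epsilon> n)\<^sup>2) * ennreal \<mu>"
    proof -
      have "1 / real (Suc (s n)) \<le> 1 / real (Suc n)"
        using seq_suble[OF sg(1), of n] by (simp add: frac_le)
      then have "GG N (D (s n)) \<le> ennreal (1 / real (Suc n))"
        using D(2)[of "s n"] by (meson ennreal_leI less_imp_le order_trans)
      then show ?thesis by (intro add_mono mult_left_mono) auto
    qed
    also have "\<dots> = ennreal (2 / real (Suc n) + 2 * (\<epsilon> n)\<^sup>2 * \<mu>)"
    proof -
      have e1: "ennreal (2 / real (Suc n)) = ennreal 2 * ennreal (1 / real (Suc n))"
        by (subst ennreal_mult[symmetric]) auto
      have e2: "ennreal (2 * (\<epsilon> n)\<^sup>2 * \<mu>) = ennreal (2 * (\<epsilon> n)\<^sup>2) * ennreal \<mu>"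
        by (rule ennreal_mult) (auto simp: \<mu>_def)
      have e3: "ennreal (2 / real (Suc n) + 2 * (\<epsilon> n)\<^sup>2 * \<mu>) = ennreal (2 / real (Suc n)) + ennreal (2 * (\<epsilon> n)\<^sup>2 * \<mu>)"
        by (rule ennreal_plus) (auto simp: \<mu>_def)
      show ?thesis using e1 e2 e3 by simp
    qed
    finally show ?thesis .
  qed
  have fin: "GG N g \<noteq> \<infinity>" using bnd[of 0] by (metis ennreal_neq_top neq_top_trans infinity_ennreal_def)
  define \<gamma> where "\<gamma> = enn2real (GG N g)"
  have Gg: "GG N g = ennreal \<gamma>" using fin by (simp add: \<gamma>_def ennreal_enn2real less_top)
  have g0: "\<gamma> \<ge> 0" by (simp add: \<gamma>_def)
  have "\<gamma> \<le> 2 / real (Suc n) + 2 * (\<epsilon> n)\<^sup>2 * \<mu>" for n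
  proof -
    have "0 \<le> 2 / real (Suc n) + 2 * (\<epsilon> n)\<^sup>2 * \<mu>" by (simp add: \<mu>_def)
    then show ?thesis using bnd[of n] g0 by (simp add: Gg ennreal_le_iff)
  qed
  moreover have "(\<lambda>n. 2 / real (Suc n) + 2 * (\<epsilon> n)\<^sup>2 * \<mu>) \<longlonglongrightarrow> 2 * 0 + 2 * 0\<^sup>2 * \<mu>"
    using LIMSEQ_inverse_real_of_nat e0
    by (intro tendsto_add tendsto_mult tendsto_power tendsto_const) (auto simp: divide_inverse)
  ultimately have "\<gamma> \<le> 0" by (intro LIMSEQ_le_const[where a=\<gamma>]) auto
  then have "GG N g = 0" using g0 Gg by simp
  moreover have "\<exists>ab\<in>IX N. g ab \<noteq> 0"
  proof (rule ccontr)
    assume "\<not> ?thesis"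
    then have "l1 N g = 0" by (simp add: l1_def)
    then show False using lg by simp
  qed
  then obtain y where "y \<in> ball 0 1" "ev N g y \<noteq> 0" using ev_zero_imp by blast
  then have "GG N g > 0" by (rule GG_pos)
  ultimately show False by simp
qed


definition PN :: "nat \<Rightarrow> (pt \<Rightarrow> real) \<Rightarrow> bool" where
  "PN N p \<longleftrightarrow> (\<exists>c. \<forall>x. p x = ev N c x)"

lemma sum_if_le:
  assumes "a \<le> (N::nat)"
  shows "(\<Sum>i\<le>N. if i \<le> a then f i else 0) = (\<Sum>i\<le>a. (f i :: real))"
proof -
  have "(\<Sum>i\<le>N. if i \<le> a then f i else 0) = (\<Sum>i\<in>{..N} \<inter> {i. i \<le> a}. f i)"
    by (subst sum.inter_restrict) auto
  also have "{..N} \<inter> {i. i \<le> a} = {..a}" using assms by auto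
  finally show ?thesis .
qed

lemma poly2_PN: "poly2 k p \<Longrightarrow> PN k p"
proof -
  assume "poly2 k p"
  then obtain c where c: "\<And>x. p x = (\<Sum>i\<le>k. \<Sum>j\<le>k - i. c i j * fst x ^ i * snd x ^ j)"
    unfolding poly2_def by blast
  define c' where "c' ab = (if snd ab \<le> k - fst ab then c (fst ab) (snd ab) else 0)" for ab
  have "p x = ev k c' x" for x
  proof -
    have "ev k c' x = (\<Sum>a\<le>k. \<Sum>b\<le>k. if b \<le> k - a then c a b * fst x ^ a * snd x ^ b else 0)"
      unfolding ev_def sum_IX c'_def by (intro sum.cong refl) auto
    also have "\<dots> = (\<Sum>a\<le>k. \<Sum>b\<le>k - a. c a b * fst x ^ a * snd x ^ b)"
      by (intro sum.cong refl sum_if_le) auto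
    finally show ?thesis using c by simp
  qed
  then show ?thesis unfolding PN_def by blast
qed

lemma PN_mono:
  assumes "PN N p" "N \<le> M" shows "PN M p"
proof -
  obtain c where c: "\<And>x. p x = ev N c x" using assms unfolding PN_def by blast
  define c' where "c' ab = (if fst ab \<le> N \<and> snd ab \<le> N then c ab else 0)" for ab
  have "ev M c' x = ev N c x" for x
  proof -
    have "ev M c' x = (\<Sum>a\<le>M. \<Sum>b\<le>M. if a \<le> N then (if b \<le> N then c (a,b) * fst x ^ a * snd x ^ b else 0) else 0)"
      unfolding ev_def sum_IX c'_def by (intro sum.cong refl) auto
    also have "\<dots> = (\<Sum>a\<le>M. if a \<le> N then (\<Sum>b\<le>M. if b \<le> N then c (a,b) * fst x ^ a * snd x ^ b else 0) else 0)"
      by (intro sum.cong refl) auto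
    also have "\<dots> = (\<Sum>a\<le>M. if a \<le> N then (\<Sum>b\<le>N. c (a,b) * fst x ^ a * snd x ^ b) else 0)"
      using assms(2) by (intro sum.cong refl) (auto simp: sum_if_le)
    also have "\<dots> = (\<Sum>a\<le>N. \<Sum>b\<le>N. c (a,b) * fst x ^ a * snd x ^ b)"
      using assms(2) by (rule sum_if_le)
    finally show ?thesis unfolding ev_def sum_IX by simp
  qed
  then show ?thesis using c unfolding PN_def by metis
qed

lemma PN_add: "PN N p \<Longrightarrow> PN N q \<Longrightarrow> PN N (\<lambda>x. p x + q x)"
proof -
  assume "PN N p" "PN N q"
  then obtain c d where "\<And>x. p x = ev N c x" "\<And>x. q x = ev N d x" unfolding PN_def by blast
  then have "\<And>x. p x + q x = ev N (\<lambda>ab. c ab + d ab) x"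
    unfolding ev_def by (simp add: sum.distrib algebra_simps)
  then show ?thesis unfolding PN_def by blast
qed

lemma ev_split2: "ev N c (x, y) = (\<Sum>b\<le>N. (\<Sum>a\<le>N. c (a, b) * x ^ a) * y ^ b)"
  unfolding ev_def sum_IX
  by (subst sum.swap) (simp add: sum_distrib_left sum_distrib_right mult_ac)

lemma PN_fst: "PN N p \<Longrightarrow> PN (Suc N) (\<lambda>x. fst x * p x)"
proof -
  assume "PN N p"
  then obtain c where c: "\<And>x. p x = ev N c x" unfolding PN_def by blast
  define c' where "c' ab = (case fst ab of 0 \<Rightarrow> 0 | Suc a \<Rightarrow> if snd ab \<le> N then c (a, snd ab) else 0)" for ab
  have "fst z * p z = ev (Suc N) c' z" for z
  proof (cases z)
    case (Pair x y)
    have inner: "(\<Sum>b\<le>Suc N. c' (Suc a, b) * y ^ b) = (\<Sum>b\<le>N. c (a, b) * y ^ b)" for a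
    proof -
      have "(\<Sum>b\<le>Suc N. c' (Suc a, b) * y ^ b) = (\<Sum>b\<le>N. c' (Suc a, b) * y ^ b)" by (simp add: sum.atMost_Suc c'_def)
      also have "\<dots> = (\<Sum>b\<le>N. c (a, b) * y ^ b)" by (intro sum.cong refl) (simp add: c'_def)
      finally show ?thesis .
    qed
    have "ev (Suc N) c' (x, y) = (\<Sum>a\<le>Suc N. (\<Sum>b\<le>Suc N. c' (a, b) * y ^ b) * x ^ a)"
      by (rule ev_split)
    also have "\<dots> = (\<Sum>a\<le>N. (\<Sum>b\<le>Suc N. c' (Suc a, b) * y ^ b) * x ^ Suc a)"
      by (subst sum.atMost_Suc_shift) (simp add: c'_def)
    also have "\<dots> = (\<Sum>a\<le>N. (\<Sum>b\<le>N. c (a, b) * y ^ b) * x ^ Suc a)"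
      by (simp only: inner)
    also have "\<dots> = x * ev N c (x, y)"
      by (simp add: ev_split sum_distrib_left mult_ac)
    finally show ?thesis using c Pair by simp
  qed
  then show ?thesis unfolding PN_def by blast
qed

lemma PN_snd: "PN N p \<Longrightarrow> PN (Suc N) (\<lambda>x. snd x * p x)"
proof -
  assume "PN N p"
  then obtain c where c: "\<And>x. p x = ev N c x" unfolding PN_def by blast
  define c' where "c' ab = (case snd ab of 0 \<Rightarrow> 0 | Suc b \<Rightarrow> if fst ab \<le> N then c (fst ab, b) else 0)" for ab
  have "snd z * p z = ev (Suc N) c' z" for z
  proof (cases z)
    case (Pair x y)
    have inner: "(\<Sum>a\<le>Suc N. c' (a, Suc b) * x ^ a) = (\<Sum>a\<le>N. c (a, b) * x ^ a)" for b
    proof -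
      have "(\<Sum>a\<le>Suc N. c' (a, Suc b) * x ^ a) = (\<Sum>a\<le>N. c' (a, Suc b) * x ^ a)" by (simp add: sum.atMost_Suc c'_def)
      also have "\<dots> = (\<Sum>a\<le>N. c (a, b) * x ^ a)" by (intro sum.cong refl) (simp add: c'_def)
      finally show ?thesis .
    qed
    have "ev (Suc N) c' (x, y) = (\<Sum>b\<le>Suc N. (\<Sum>a\<le>Suc N. c' (a, b) * x ^ a) * y ^ b)"
      by (rule ev_split2)
    also have "\<dots> = (\<Sum>b\<le>N. (\<Sum>a\<le>Suc N. c' (a, Suc b) * x ^ a) * y ^ Suc b)"
      by (subst sum.atMost_Suc_shift) (simp add: c'_def)
    also have "\<dots> = (\<Sum>b\<le>N. (\<Sum>a\<le>N. c (a, b) * x ^ a) * y ^ Suc b)"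
      by (simp only: inner)
    also have "\<dots> = y * ev N c (x, y)"
      by (simp add: ev_split2 sum_distrib_left mult_ac)
    finally show ?thesis using c Pair by simp
  qed
  then show ?thesis unfolding PN_def by blast
qed

lemma RT_PN:
  assumes "RT k v"
  shows "PN (Suc k) (\<lambda>x. fst (v x))" "PN (Suc k) (\<lambda>x. snd (v x))"
proof -
  obtain p1 p2 q where pq: "poly2 k p1" "poly2 k p2" "poly2 k q"
    "\<And>x. v x = (p1 x + fst x * q x, p2 x + snd x * q x)"
    using assms unfolding RT_def by blast
  have "PN (Suc k) p1" "PN (Suc k) p2"
    using pq(1,2) by (auto intro: PN_mono poly2_PN)
  moreover have "PN (Suc k) (\<lambda>x. fst x * q x)" "PN (Suc k) (\<lambda>x. snd x * q x)"
    using pq(3) by (auto intro: PN_fst PN_snd poly2_PN)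
  ultimately show "PN (Suc k) (\<lambda>x. fst (v x))" "PN (Suc k) (\<lambda>x. snd (v x))"
    using PN_add by (simp_all add: pq(4))
qed

definition bco :: "real \<Rightarrow> real \<Rightarrow> nat \<Rightarrow> nat \<Rightarrow> real" where
  "bco u r a i = (if i \<le> a then real (a choose i) * u ^ (a - i) * r ^ i else 0)"

lemma binom_exp:
  assumes "a \<le> N"
  shows "(u + r * t) ^ a = (\<Sum>i\<le>N. bco u r a i * t ^ i)"
proof -
  have "(u + r * t) ^ a = (r * t + u) ^ a" by (simp add: add.commute)
  also have "\<dots> = (\<Sum>i\<le>a. real (a choose i) * (r * t) ^ i * u ^ (a - i))"
    by (rule binomial_ring)
  also have "\<dots> = (\<Sum>i\<le>N. if i \<le> a then real (a choose i) * u ^ (a - i) * r ^ i * t ^ i else 0)"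
    using assms by (subst sum_if_le) (auto simp: power_mult_distrib mult_ac)
  also have "\<dots> = (\<Sum>i\<le>N. bco u r a i * t ^ i)"
    by (intro sum.cong refl) (simp add: bco_def)
  finally show ?thesis .
qed

lemma sum_IX_prod: "(\<Sum>ij\<in>IX N. f (fst ij) * g (snd ij)) = (\<Sum>i\<le>N. f i) * (\<Sum>j\<le>N. (g j :: real))"
  by (simp add: sum_IX sum_product)

lemma PN_affine:
  assumes "PN N p"
  shows "PN N (\<lambda>y. p (x0 + r *\<^sub>R y))"
proof -
  obtain c where c: "\<And>x. p x = ev N c x" using assms unfolding PN_def by blast
  define c' where "c' ij = (\<Sum>ab\<in>IX N. c ab * bco (fst x0) r (fst ab) (fst ij) * bco (snd x0) r (snd ab) (snd ij))" for ij
  have "p (x0 + r *\<^sub>R y) = ev N c' y" for y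
  proof -
    have "ev N c' y = (\<Sum>ij\<in>IX N. \<Sum>ab\<in>IX N. c ab * ((bco (fst x0) r (fst ab) (fst ij) * fst y ^ fst ij) * (bco (snd x0) r (snd ab) (snd ij) * snd y ^ snd ij)))"
      unfolding ev_def c'_def by (simp add: sum_distrib_right sum_distrib_left mult_ac)
    also have "\<dots> = (\<Sum>ab\<in>IX N. \<Sum>ij\<in>IX N. c ab * ((bco (fst x0) r (fst ab) (fst ij) * fst y ^ fst ij) * (bco (snd x0) r (snd ab) (snd ij) * snd y ^ snd ij)))"
      by (rule sum.swap)
    also have "\<dots> = (\<Sum>ab\<in>IX N. c ab * ((\<Sum>i\<le>N. bco (fst x0) r (fst ab) i * fst y ^ i) * (\<Sum>j\<le>N. bco (snd x0) r (snd ab) j * snd y ^ j)))"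
    proof (intro sum.cong refl)
      fix ab
      show "(\<Sum>ij\<in>IX N. c ab * ((bco (fst x0) r (fst ab) (fst ij) * fst y ^ fst ij) * (bco (snd x0) r (snd ab) (snd ij) * snd y ^ snd ij))) = c ab * ((\<Sum>i\<le>N. bco (fst x0) r (fst ab) i * fst y ^ i) * (\<Sum>j\<le>N. bco (snd x0) r (snd ab) j * snd y ^ j))"
      proof -
        have "(\<Sum>ij\<in>IX N. c ab * ((bco (fst x0) r (fst ab) (fst ij) * fst y ^ fst ij) * (bco (snd x0) r (snd ab) (snd ij) * snd y ^ snd ij))) = c ab * (\<Sum>ij\<in>IX N. (bco (fst x0) r (fst ab) (fst ij) * fst y ^ fst ij) * (bco (snd x0) r (snd ab) (snd ij) * snd y ^ snd ij))"
          by (simp only: sum_distrib_left)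
        also have "(\<Sum>ij\<in>IX N. (bco (fst x0) r (fst ab) (fst ij) * fst y ^ fst ij) * (bco (snd x0) r (snd ab) (snd ij) * snd y ^ snd ij)) = (\<Sum>i\<le>N. bco (fst x0) r (fst ab) i * fst y ^ i) * (\<Sum>j\<le>N. bco (snd x0) r (snd ab) j * snd y ^ j)"
          by (rule sum_IX_prod[where f="\<lambda>i. bco (fst x0) r (fst ab) i * fst y ^ i" and g="\<lambda>j. bco (snd x0) r (snd ab) j * snd y ^ j"])
        finally show ?thesis .
      qed
    qed
    also have "\<dots> = (\<Sum>ab\<in>IX N. c ab * ((fst x0 + r * fst y) ^ fst ab * (snd x0 + r * snd y) ^ snd ab))"
      by (intro sum.cong refl) (auto simp: IX_def binom_exp)
    also have "\<dots> = p (x0 + r *\<^sub>R y)"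
      by (simp add: c ev_def mult_ac)
    finally show ?thesis by simp
  qed
  then show ?thesis unfolding PN_def by blast
qed

definition QL :: "nat \<Rightarrow> (nat \<times> nat \<Rightarrow> real) \<Rightarrow> pt \<Rightarrow> pt \<Rightarrow> real poly" where
  "QL N c y d = (\<Sum>ab\<in>IX N. smult (c ab) ([:fst y, fst d:] ^ fst ab * [:snd y, snd d:] ^ snd ab))"

lemma poly_QL: "poly (QL N c y d) t = ev N c (y + t *\<^sub>R d)"
  by (simp add: QL_def ev_def poly_sum mult_ac)

lemma deriv_poly_pow: "(deriv ^^ j) (poly (P :: real poly)) = poly ((pderiv ^^ j) P)"
proof (induction j)
  case 0 then show ?case by simp
next
  case (Suc j)
  have "deriv (poly Q) = poly (pderiv Q)" for Q :: "real poly"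
    by (rule ext) (rule DERIV_imp_deriv[OF poly_DERIV])
  then show ?case using Suc by simp
qed

lemma dd_coeff: "(deriv ^^ j) (poly (P :: real poly)) 0 = fact j * coeff P j"
  by (simp add: deriv_poly_pow poly_0_coeff_0 coeff_higher_pderiv pochhammer_fact)

lemma coeff_lin_mult:
  fixes P :: "real poly"
  assumes "\<And>j. \<bar>coeff P j\<bar> \<le> B" "\<bar>u\<bar> \<le> M" "\<bar>w\<bar> \<le> M"
  shows "\<bar>coeff ([:u, w:] * P) j\<bar> \<le> 2 * M * B"
proof -
  have B0: "B \<ge> 0" using assms(1)[of 0] by linarith
  have eq: "[:u, w:] * P = smult u P + pCons 0 (smult w P)"
    by (simp add: mult_pCons_left)
  have a: "\<bar>u * coeff P j\<bar> \<le> M * B"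
    using assms B0 by (simp add: abs_mult mult_mono)
  have b: "\<bar>(case j of 0 \<Rightarrow> 0 | Suc i \<Rightarrow> w * coeff P i)\<bar> \<le> M * B"
    using assms B0 by (cases j) (auto simp: abs_mult mult_mono order.trans[OF abs_ge_zero])
  have "coeff ([:u, w:] * P) j = u * coeff P j + (case j of 0 \<Rightarrow> 0 | Suc i \<Rightarrow> w * coeff P i)"
    unfolding eq by (cases j) auto
  then show ?thesis using a b abs_triangle_ineq[of "u * coeff P j" "case j of 0 \<Rightarrow> 0 | Suc i \<Rightarrow> w * coeff P i"] by linarith
qed

lemma coeff_lin_pow:
  fixes P :: "real poly"
  assumes "\<And>j. \<bar>coeff P j\<bar> \<le> B" "\<bar>u\<bar> \<le> M" "\<bar>w\<bar> \<le> M"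
  shows "\<bar>coeff ([:u, w:] ^ a * P) j\<bar> \<le> (2 * M) ^ a * B"
proof (induction a arbitrary: j)
  case 0 then show ?case using assms(1) by simp
next
  case (Suc a)
  have "\<bar>coeff ([:u, w:] * ([:u, w:] ^ a * P)) j\<bar> \<le> 2 * M * ((2 * M) ^ a * B)"
    by (rule coeff_lin_mult[OF Suc.IH assms(2,3)])
  moreover have "[:u, w:] ^ Suc a * P = [:u, w:] * ([:u, w:] ^ a * P)" by (simp only: power_Suc mult.assoc)
  moreover have "(2 * M) ^ Suc a * B = 2 * M * ((2 * M) ^ a * B)" by (simp only: power_Suc mult.assoc)
  ultimately show ?case by simp
qed

lemma coeff_QL:
  assumes "\<bar>fst y\<bar> \<le> M" "\<bar>snd y\<bar> \<le> M" "\<bar>fst d\<bar> \<le> M" "\<bar>snd d\<bar> \<le> M" "1 \<le> M"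
  shows "\<bar>coeff (QL N c y d) j\<bar> \<le> l1 N c * (2 * M) ^ (2 * N)"
proof -
  have t: "\<bar>coeff ([:fst y, fst d:] ^ a * [:snd y, snd d:] ^ b) j\<bar> \<le> (2 * M) ^ (2 * N)"
    if "a \<le> N" "b \<le> N" for a b j
  proof -
    have one: "\<bar>coeff (1 :: real poly) j\<bar> \<le> 1" for j by (simp add: coeff_1)
    have "\<bar>coeff ([:snd y, snd d:] ^ b * 1) j\<bar> \<le> (2 * M) ^ b * 1" for j
      by (rule coeff_lin_pow[OF one assms(2,4)])
    then have "\<bar>coeff ([:fst y, fst d:] ^ a * [:snd y, snd d:] ^ b) j\<bar> \<le> (2 * M) ^ a * ((2 * M) ^ b * 1)"
      by (intro coeff_lin_pow assms(1,3)) simp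
    also have "\<dots> = (2 * M) ^ (a + b)" by (simp add: power_add)
    also have "\<dots> \<le> (2 * M) ^ (2 * N)"
      using that assms(5) by (intro power_increasing) auto
    finally show ?thesis .
  qed
  have "\<bar>coeff (QL N c y d) j\<bar> = \<bar>\<Sum>ab\<in>IX N. c ab * coeff ([:fst y, fst d:] ^ fst ab * [:snd y, snd d:] ^ snd ab) j\<bar>"
    by (simp add: QL_def coeff_sum)
  also have "\<dots> \<le> (\<Sum>ab\<in>IX N. \<bar>c ab\<bar> * (2 * M) ^ (2 * N))"
  proof (rule order.trans[OF sum_abs], rule sum_mono)
    fix ab assume "ab \<in> IX N"
    then have "\<bar>coeff ([:fst y, fst d:] ^ fst ab * [:snd y, snd d:] ^ snd ab) j\<bar> \<le> (2 * M) ^ (2 * N)"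
      by (intro t) (auto simp: IX_def)
    then show "\<bar>c ab * coeff ([:fst y, fst d:] ^ fst ab * [:snd y, snd d:] ^ snd ab) j\<bar> \<le> \<bar>c ab\<bar> * (2 * M) ^ (2 * N)"
      by (simp add: abs_mult mult_left_mono)
  qed
  also have "\<dots> = l1 N c * (2 * M) ^ (2 * N)" by (simp add: l1_def sum_distrib_right)
  finally show ?thesis .
qed

lemma DB:
  assumes "\<And>z. p (x0 + r *\<^sub>R z) = ev N c z" "r > 0"
    and "\<bar>fst y\<bar> \<le> M" "\<bar>snd y\<bar> \<le> M" "\<bar>fst \<nu>\<bar> \<le> M" "\<bar>snd \<nu>\<bar> \<le> M" "1 \<le> M"
    and "x = x0 + r *\<^sub>R y"
  shows "\<bar>(deriv ^^ j) (\<lambda>t. p (x + t *\<^sub>R \<nu>)) 0\<bar> \<le> fact j * (1 / r) ^ j * (l1 N c * (2 * M) ^ (2 * N))"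
proof -
  have fe: "(\<lambda>t. p (x + t *\<^sub>R \<nu>)) = poly (pcompose (QL N c y \<nu>) [:0, 1 / r:])"
  proof
    fix t
    have "x + t *\<^sub>R \<nu> = x0 + r *\<^sub>R (y + (t / r) *\<^sub>R \<nu>)"
      using assms(2,8) by (simp add: algebra_simps)
    then show "p (x + t *\<^sub>R \<nu>) = poly (pcompose (QL N c y \<nu>) [:0, 1 / r:]) t"
      by (simp add: poly_pcompose poly_QL assms(1))
  qed
  have "(deriv ^^ j) (\<lambda>t. p (x + t *\<^sub>R \<nu>)) 0 = fact j * ((1 / r) ^ j * coeff (QL N c y \<nu>) j)"
    unfolding fe dd_coeff coeff_pcompose_linear ..
  moreover have "\<bar>coeff (QL N c y \<nu>) j\<bar> \<le> l1 N c * (2 * M) ^ (2 * N)"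
    by (rule coeff_QL[OF assms(3-7)])
  ultimately show ?thesis using assms(2)
    by (simp add: abs_mult mult_left_mono)
qed

lemma CV:
  fixes x0 :: pt
  assumes [measurable]: "f \<in> borel_measurable borel" and r: "r > 0"
  shows "(\<integral>\<^sup>+ x\<in>cball x0 r. f x \<partial>lborel) = ennreal (r\<^sup>2) * (\<integral>\<^sup>+ y\<in>cball 0 1. f (x0 + r *\<^sub>R y) \<partial>lborel)"
proof -
  have ind: "indicator (cball x0 r) (x0 + r *\<^sub>R y) = (indicator (cball (0::pt) 1) y :: ennreal)" for y
  proof -
    have "x0 + r *\<^sub>R y \<in> cball x0 r \<longleftrightarrow> y \<in> cball 0 1"
      using r by (simp add: dist_norm)
    then show ?thesis by (simp add: indicator_def)
  qed
  show ?thesis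
    by (subst lborel_affine[of r x0]) (use r in \<open>simp_all add: nn_integral_density nn_integral_distr nn_integral_cmult ind power2_eq_square\<close>)
qed

lemma PN_meas: "PN N p \<Longrightarrow> p \<in> borel_measurable borel"
proof -
  assume "PN N p"
  then obtain c where "\<And>x. p x = ev N c x" unfolding PN_def by blast
  then have "p = ev N c" by auto
  then show ?thesis by simp
qed

lemma EB:
  assumes lam: "lam > 0" "\<And>c. ennreal (lam * (l1 N c)\<^sup>2) \<le> GG N c"
    and c: "\<And>z. p (x0 + r *\<^sub>R z) = ev N c z" and r: "r > 0" and sub: "cball x0 r \<subseteq> K"
    and p: "PN N p" and F: "\<And>x. (p x)\<^sup>2 \<le> F x"
  shows "ennreal (lam * r\<^sup>2 * (l1 N c)\<^sup>2) \<le> (\<integral>\<^sup>+ x\<in>K. ennreal (F x) \<partial>lborel)"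
proof -
  have [measurable]: "p \<in> borel_measurable borel" by (rule PN_meas[OF p])
  have "ennreal (lam * r\<^sup>2 * (l1 N c)\<^sup>2) = ennreal (r\<^sup>2) * ennreal (lam * (l1 N c)\<^sup>2)"
    using lam by (simp add: ennreal_mult[symmetric] mult_ac)
  also have "\<dots> \<le> ennreal (r\<^sup>2) * GG N c" by (intro mult_left_mono lam(2)) simp
  also have "GG N c = (\<integral>\<^sup>+ y\<in>cball 0 1. ennreal ((p (x0 + r *\<^sub>R y))\<^sup>2) \<partial>lborel)"
    unfolding GG_def c ..
  also have "ennreal (r\<^sup>2) * \<dots> = (\<integral>\<^sup>+ x\<in>cball x0 r. ennreal ((p x)\<^sup>2) \<partial>lborel)"
    by (rule CV[symmetric]) (use r in auto)
  also have "\<dots> \<le> (\<integral>\<^sup>+ x\<in>K. ennreal (F x) \<partial>lborel)"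
    using sub F by (intro nn_integral_mono) (auto split: split_indicator intro!: ennreal_leI)
  finally show ?thesis .
qed


lemma noncol_distinct:
  assumes "\<not> collinear {a, b, c::pt}" shows "a \<noteq> b" "a \<noteq> c" "b \<noteq> c"
  using assms by (auto simp: insert_commute)

lemma col_of_mult:
  assumes "c - a = k *\<^sub>R (b - a)" shows "collinear {a, b, c::pt}"
proof -
  have "c = (1 - k) *\<^sub>R a + (1 - (1 - k)) *\<^sub>R b" using assms by (simp add: algebra_simps)
  then have "collinear {a, c, b}" unfolding collinear_3_expand by blast
  then show ?thesis by (simp add: insert_commute)
qed

lemma chord:
  assumes nc: "\<not> collinear {a, b, c::pt}" and p: "p \<in> convex hull {a, b, c}" and q: "q \<in> convex hull {a, b, c}"
    and pq: "p - q = s *\<^sub>R (b - a)"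
  shows "\<bar>s\<bar> \<le> 1"
proof -
  obtain u v w where uvw: "p = u *\<^sub>R a + v *\<^sub>R b + w *\<^sub>R c" "0 \<le> u" "0 \<le> v" "0 \<le> w" "u + v + w = 1"
    using p unfolding convex_hull_3 by blast
  obtain u' v' w' where uvw': "q = u' *\<^sub>R a + v' *\<^sub>R b + w' *\<^sub>R c" "0 \<le> u'" "0 \<le> v'" "0 \<le> w'" "u' + v' + w' = 1"
    using q unfolding convex_hull_3 by blast
  have u: "u = 1 - v - w" "u' = 1 - v' - w'" using uvw(5) uvw'(5) by auto
  have eq: "(v - v' - s) *\<^sub>R (b - a) + (w - w') *\<^sub>R (c - a) = 0"
  proof -
    have "p - q = (v - v') *\<^sub>R (b - a) + (w - w') *\<^sub>R (c - a)"
      unfolding uvw(1) uvw'(1) u by (simp add: algebra_simps)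
    then show ?thesis using pq by (simp add: algebra_simps)
  qed
  have "w = w'"
  proof (rule ccontr)
    assume "w \<noteq> w'"
    have h1: "(w - w') *\<^sub>R (c - a) = - ((v - v' - s) *\<^sub>R (b - a))"
      using eq by (subst eq_neg_iff_add_eq_0) (simp add: add.commute)
    have h2: "(w - w') *\<^sub>R (c - a) = (s - v + v') *\<^sub>R (b - a)"
      unfolding h1 by (simp add: scaleR_left_diff_distrib algebra_simps)
    have "c - a = (1 / (w - w')) *\<^sub>R ((w - w') *\<^sub>R (c - a))"
      using \<open>w \<noteq> w'\<close> by simp
    also have "\<dots> = ((s - v + v') / (w - w')) *\<^sub>R (b - a)"
      unfolding h2 by simp
    finally have "c - a = ((s - v + v') / (w - w')) *\<^sub>R (b - a)" .
    then show False using nc col_of_mult by blast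
  qed
  then have "(v - v' - s) *\<^sub>R (b - a) = 0" using eq by simp
  moreover have "b - a \<noteq> 0" using noncol_distinct[OF nc] by simp
  ultimately have "s = v - v'" by simp
  moreover have "v \<le> 1" "v' \<le> 1" using uvw uvw' by linarith+
  ultimately show ?thesis using uvw(3) uvw'(3) by linarith
qed

lemma verts_sub: "verts (convex hull S) \<subseteq> S"
  unfolding verts_def using extreme_point_of_convex_hull by blast

lemma verts_in: "verts K \<subseteq> K"
  unfolding verts_def extreme_point_of_def by blast

lemma third_vertex:
  assumes "a' \<in> {a, b, c}" "b' \<in> {a, b, c}" "a' \<noteq> b'"
  shows "\<exists>c'. {a, b, c} = {a', b', c'}"
proof -
  consider "a' = a" "b' = b" | "a' = a" "b' = c" | "a' = b" "b' = a" | "a' = b" "b' = c" | "a' = c" "b' = a" | "a' = c" "b' = b"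
    using assms by blast
  then show ?thesis
  proof cases
    case 1 then show ?thesis by (intro exI[of _ c]) simp
  next
    case 2 then show ?thesis by (intro exI[of _ b]) blast
  next
    case 3 then show ?thesis by (intro exI[of _ c]) blast
  next
    case 4 then show ?thesis by (intro exI[of _ a]) blast
  next
    case 5 then show ?thesis by (intro exI[of _ b]) blast
  next
    case 6 then show ?thesis by (intro exI[of _ a]) blast
  qed
qed

lemma edge_len:
  assumes nc: "\<not> collinear {a, b, c::pt}" and K: "K = convex hull {a, b, c}"
    and ab: "a' \<in> verts K" "b' \<in> verts K" "a' \<noteq> b'" and sub: "cball x0 r \<subseteq> K" and r: "r \<ge> 0"
  shows "2 * r \<le> dist a' b'"
proof -
  have vs: "verts K \<subseteq> {a, b, c}" unfolding K by (rule verts_sub)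
  have a1: "a' \<in> {a, b, c}" using ab(1) vs by (rule subsetD[rotated])
  have b1: "b' \<in> {a, b, c}" using ab(2) vs by (rule subsetD[rotated])
  obtain c' where c': "{a, b, c} = {a', b', c'}" using third_vertex[OF a1 b1 ab(3)] by (elim exE)
  have nc': "\<not> collinear {a', b', c'}" using nc unfolding c' .
  have K': "K = convex hull {a', b', c'}" using K unfolding c' .
  define d where "d = dist a' b'"
  have d: "d > 0" using ab(3) by (simp add: d_def)
  define u where "u = (1 / d) *\<^sub>R (b' - a')"
  have "norm (b' - a') = d" by (simp add: d_def dist_norm norm_minus_commute)
  then have nu: "norm u = 1" using d unfolding u_def by simp
  have "dist x0 (x0 + r *\<^sub>R u) = r" using r nu by (simp add: dist_norm)
  then have "x0 + r *\<^sub>R u \<in> cball x0 r" by simp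
  then have p: "x0 + r *\<^sub>R u \<in> K" using sub by (meson subsetD)
  have "dist x0 (x0 - r *\<^sub>R u) = r" using r nu by (simp add: dist_norm)
  then have "x0 - r *\<^sub>R u \<in> cball x0 r" by simp
  then have q: "x0 - r *\<^sub>R u \<in> K" using sub by (meson subsetD)
  have e2: "(2 * r) *\<^sub>R u = r *\<^sub>R u + r *\<^sub>R u" by (simp only: scaleR_scaleR[symmetric] scaleR_2)
  have "(x0 + r *\<^sub>R u) - (x0 - r *\<^sub>R u) = r *\<^sub>R u + r *\<^sub>R u" by (simp only: diff_add_eq diff_diff_eq2 add.commute add.left_commute add_diff_cancel_left')
  also have "\<dots> = (2 * r) *\<^sub>R u" by (rule e2[symmetric])
  also have "\<dots> = (2 * r / d) *\<^sub>R (b' - a')" unfolding u_def scaleR_scaleR by simp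
  finally have "(x0 + r *\<^sub>R u) - (x0 - r *\<^sub>R u) = (2 * r / d) *\<^sub>R (b' - a')" .
  then have "\<bar>2 * r / d\<bar> \<le> 1" by (rule chord[OF nc' p[unfolded K'] q[unfolded K']])
  then have "2 * r / d \<le> 1" using r d by simp
  then show ?thesis using d by (simp add: d_def divide_le_eq)
qed

lemma inr_facts:
  assumes K: "K = convex hull {a, b, c::pt}" and nc: "\<not> collinear {a, b, c}" and ds: "diam K \<le> \<sigma> * inradius K"
  shows "diam K > 0" "inradius K > 0" "\<sigma> > 0" "\<exists>x0. cball x0 (inradius K / 2) \<subseteq> K"
proof -
  have bK: "bounded K" using K by (simp add: finite_imp_compact_convex_hull compact_imp_bounded)
  have aK: "a \<in> K" "b \<in> K" unfolding K by (simp_all add: hull_inc)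
  have "dist a b \<le> diam K" unfolding diam_def by (rule diameter_bounded_bound[OF bK aK])
  moreover have "dist a b > 0" using noncol_distinct[OF nc] by simp
  ultimately show dp: "diam K > 0" by linarith
  define S where "S = {r. \<exists>x. ball x r \<subseteq> K}"
  have S0: "0 \<in> S" unfolding S_def by (intro CollectI exI[of _ a]) simp
  have Sb: "r \<le> 2 * diam K" if "r \<in> S" for r
  proof (cases "r > 0")
    case True
    from that obtain x where x: "ball x r \<subseteq> K" unfolding S_def by blast
    have "x \<in> ball x r" using True by simp
    then have xK: "x \<in> K" using x by blast
    have n: "norm ((r / 2) *\<^sub>R (1::real, 0::real)) = r / 2" using True by (simp add: norm_Pair)
    have dd: "dist x (x + (r / 2) *\<^sub>R (1, 0)) = r / 2" using n by (simp add: dist_norm)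
    then have "x + (r / 2) *\<^sub>R (1, 0) \<in> ball x r" using True by simp
    then have "x + (r / 2) *\<^sub>R (1, 0) \<in> K" using x by blast
    then have "dist x (x + (r / 2) *\<^sub>R (1, 0)) \<le> diam K"
      unfolding diam_def by (intro diameter_bounded_bound[OF bK xK])
    then show ?thesis using dd by simp
  next
    case False then show ?thesis using dp by simp
  qed
  have bdd: "bdd_above S" by (rule bdd_aboveI[of _ "2 * diam K"]) (rule Sb)
  have inr: "inradius K = Sup S" by (simp add: inradius_def S_def)
  have i0: "inradius K \<ge> 0" unfolding inr using S0 bdd by (rule cSup_upper)
  have "\<sigma> * inradius K > 0" using ds dp by linarith
  then show ip: "inradius K > 0" and sp: "\<sigma> > 0" using i0
    by (auto simp: zero_less_mult_iff)
  have "inradius K / 2 < Sup S" using ip inr by simp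
  moreover have ne: "S \<noteq> {}" using S0 by blast
  ultimately have "\<exists>x\<in>S. inradius K / 2 < x" using less_cSup_iff[OF ne bdd] by simp
  then obtain r where r: "r \<in> S" "inradius K / 2 < r" by blast
  then obtain x0 where "ball x0 r \<subseteq> K" unfolding S_def by blast
  moreover have "cball x0 (inradius K / 2) \<subseteq> ball x0 r" using r(2) by auto
  ultimately show "\<exists>x0. cball x0 (inradius K / 2) \<subseteq> K" by blast
qed

lemma edges_fin:
  assumes K: "K = convex hull {a, b, c::pt}"
  shows "finite (edges K)" "card (edges K) \<le> 9"
proof -
  have vs: "verts K \<subseteq> {a, b, c}" using K verts_sub by blast
  have fv: "finite (verts K)" using vs finite_subset by blast
  have cv: "card (verts K) \<le> 3"
  proof -
    have "card {a, b, c} \<le> 3" by (auto simp: card_insert_if)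
    moreover have "card (verts K) \<le> card {a, b, c}" by (rule card_mono[OF _ vs]) simp
    ultimately show ?thesis by linarith
  qed
  have sub: "edges K \<subseteq> (\<lambda>(x, y). closed_segment x y) ` (verts K \<times> verts K)"
    unfolding edges_def by auto
  have fin: "finite ((\<lambda>(x, y). closed_segment x y) ` (verts K \<times> verts K))" using fv by simp
  show "finite (edges K)" using finite_subset[OF sub fin] .
  have "card (edges K) \<le> card ((\<lambda>(x, y). closed_segment x y) ` (verts K \<times> verts K))"
    by (rule card_mono[OF fin sub])
  also have "\<dots> \<le> card (verts K \<times> verts K)" by (rule card_image_le) (use fv in simp)
  also have "\<dots> = card (verts K) * card (verts K)" by (rule card_cartesian_product)
  also have "\<dots> \<le> 3 * 3" using cv by (intro mult_mono) auto
  finally show "card (edges K) \<le> 9" by simp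
qed

lemma edge_sub:
  assumes "e \<in> edges K" "convex K" shows "e \<subseteq> K"
proof -
  obtain x y where e: "e = closed_segment x y" and xy: "x \<in> verts K" "y \<in> verts K"
    using assms(1) unfolding edges_def by blast
  have "x \<in> K" using xy(1) verts_in[of K] by (rule subsetD[rotated])
  have "y \<in> K" using xy(2) verts_in[of K] by (rule subsetD[rotated])
  then show ?thesis unfolding e using \<open>x \<in> K\<close> by (intro closed_segment_subset[OF _ _ assms(2)])
qed


lemma edge_int_bound:
  assumes e: "e \<in> edges K" and bK: "bounded K" and eK: "e \<subseteq> K"
    and f: "\<And>x. x \<in> e \<Longrightarrow> f x \<le> B" and B: "0 \<le> B"
  shows "edge_int e f \<le> ennreal (diam K * B)"
proof -
  obtain a0 b0 where ab0: "a0 \<noteq> b0" "e = closed_segment a0 b0"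
    using e unfolding edges_def by blast
  define P where "P = (SOME (a, b). a \<noteq> b \<and> e = closed_segment a b)"
  have "(\<lambda>(a, b). a \<noteq> b \<and> e = closed_segment a b) P"
    unfolding P_def by (rule someI[of _ "(a0, b0)"]) (use ab0 in simp)
  then obtain a b where P: "P = (a, b)" and ab: "a \<noteq> b" "e = closed_segment a b"
    by (cases P) auto
  have ei: "edge_int e f = ennreal (dist a b) * (\<integral>\<^sup>+ t\<in>{0..1}. ennreal (f (a + t *\<^sub>R (b - a))) \<partial>lborel)"
    unfolding edge_int_def P_def[symmetric] P by simp
  have "(\<integral>\<^sup>+ t\<in>{0..1}. ennreal (f (a + t *\<^sub>R (b - a))) \<partial>lborel) \<le> (\<integral>\<^sup>+ t\<in>{0..1::real}. ennreal B \<partial>lborel)"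
  proof (rule nn_integral_mono)
    fix t :: real
    show "ennreal (f (a + t *\<^sub>R (b - a))) * indicator {0..1} t \<le> ennreal B * indicator {0..1} t"
    proof (cases "t \<in> {0..1}")
      case True
      have "a + t *\<^sub>R (b - a) = (1 - t) *\<^sub>R a + t *\<^sub>R b" by (simp add: algebra_simps)
      then have "a + t *\<^sub>R (b - a) \<in> e" unfolding ab(2) closed_segment_def using True by auto
      then have "f (a + t *\<^sub>R (b - a)) \<le> B" by (rule f)
      then show ?thesis using True by (simp add: ennreal_leI)
    qed simp
  qed
  also have "\<dots> = ennreal B" by (subst nn_integral_cmult_indicator) auto
  finally have I: "(\<integral>\<^sup>+ t\<in>{0..1}. ennreal (f (a + t *\<^sub>R (b - a))) \<partial>lborel) \<le> ennreal B" .
  have "a \<in> K" "b \<in> K" using eK ab(2) by auto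
  then have "dist a b \<le> diam K" unfolding diam_def by (rule diameter_bounded_bound[OF bK])
  then have "edge_int e f \<le> ennreal (diam K) * ennreal B"
    unfolding ei by (intro mult_mono I) (auto intro: ennreal_leI)
  also have "\<dots> = ennreal (diam K * B)" using B by (rule ennreal_mult''[symmetric])
  finally show ?thesis .
qed

lemma geo_bound:
  fixes q \<beta> h H :: real
  assumes "0 \<le> q" "q \<le> \<beta> * h" "0 \<le> \<beta>" "0 \<le> h" "h \<le> H"
  shows "(\<Sum>j=1..m. q ^ j) \<le> real m * (\<beta> * h) * (1 + \<beta> * H) ^ m"
proof -
  have t: "q ^ j \<le> (\<beta> * h) * (1 + \<beta> * H) ^ m" if jm: "j \<in> {1..m}" for j
  proof -
    obtain i where i: "j = Suc i" "i < m" using jm by (cases j) auto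
    have "q ^ j = q * q ^ i" using i by simp
    also have "\<dots> \<le> (\<beta> * h) * (\<beta> * H) ^ i"
    proof (rule mult_mono)
      show "q ^ i \<le> (\<beta> * H) ^ i"
        using assms by (intro power_mono) (auto intro: order.trans mult_left_mono)
    qed (use assms in auto)
    also have "\<dots> \<le> (\<beta> * h) * (1 + \<beta> * H) ^ m"
    proof (rule mult_left_mono)
      have "0 \<le> \<beta> * H" using assms by auto
      then have "(\<beta> * H) ^ i \<le> (1 + \<beta> * H) ^ i" by (intro power_mono) auto
      also have "\<dots> \<le> (1 + \<beta> * H) ^ m" using i \<open>0 \<le> \<beta> * H\<close> by (intro power_increasing) auto
      finally show "(\<beta> * H) ^ i \<le> (1 + \<beta> * H) ^ m" .
    qed (use assms in auto)
    finally show ?thesis .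
  qed
  have "(\<Sum>j=1..m. q ^ j) \<le> (\<Sum>j=1..m. (\<beta> * h) * (1 + \<beta> * H) ^ m)"
    by (rule sum_mono) (rule t)
  also have "\<dots> = real m * (\<beta> * h) * (1 + \<beta> * H) ^ m" by simp
  finally show ?thesis .
qed

lemma norm_pair_le: "norm (a :: real, b :: real) \<le> \<bar>a\<bar> + \<bar>b\<bar>"
proof -
  have "norm (a, b) = norm ((a, 0) + (0, b))" by simp
  also have "\<dots> \<le> norm (a, 0::real) + norm (0::real, b)" by (rule norm_triangle_ineq)
  finally show ?thesis by (simp add: norm_Pair)
qed

lemma PW:
  fixes v :: "pt \<Rightarrow> pt"
  assumes c1: "\<And>z. fst (v (x0 + r *\<^sub>R z)) = ev N c1 z" and c2: "\<And>z. snd (v (x0 + r *\<^sub>R z)) = ev N c2 z"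
    and r: "r > 0" and xs: "norm (x - x0) \<le> 2 * \<sigma> * r" and s: "0 \<le> \<sigma>" and nu: "norm \<nu> = 1"
  shows "norm (dirderiv j \<nu> v x) \<le> fact j * (1 / r) ^ j * ((2 * (1 + 2 * \<sigma>)) ^ (2 * N) * (l1 N c1 + l1 N c2))"
proof -
  define M where "M = 1 + 2 * \<sigma>"
  define y where "y = (1 / r) *\<^sub>R (x - x0)"
  have xy: "x = x0 + r *\<^sub>R y" using r by (simp add: y_def)
  have ny: "norm y \<le> 2 * \<sigma>" using xs r by (simp add: y_def divide_le_eq mult_ac)
  have y1: "\<bar>fst y\<bar> \<le> M" "\<bar>snd y\<bar> \<le> M"
    using ny norm_fst_le[of "fst y" "snd y"] norm_snd_le[of "snd y" "fst y"] by (auto simp: M_def)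
  have n1: "\<bar>fst \<nu>\<bar> \<le> M" "\<bar>snd \<nu>\<bar> \<le> M"
    using nu norm_fst_le[of "fst \<nu>" "snd \<nu>"] norm_snd_le[of "snd \<nu>" "fst \<nu>"] s by (auto simp: M_def)
  have M1: "1 \<le> M" using s by (simp add: M_def)
  have d1: "\<bar>(deriv ^^ j) (\<lambda>t. fst (v (x + t *\<^sub>R \<nu>))) 0\<bar> \<le> fact j * (1 / r) ^ j * (l1 N c1 * (2 * M) ^ (2 * N))"
    by (rule DB[where p="\<lambda>x. fst (v x)", OF c1 r y1 n1 M1 xy])
  have d2: "\<bar>(deriv ^^ j) (\<lambda>t. snd (v (x + t *\<^sub>R \<nu>))) 0\<bar> \<le> fact j * (1 / r) ^ j * (l1 N c2 * (2 * M) ^ (2 * N))"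
    by (rule DB[where p="\<lambda>x. snd (v x)", OF c2 r y1 n1 M1 xy])
  have "norm (dirderiv j \<nu> v x) \<le> \<bar>(deriv ^^ j) (\<lambda>t. fst (v (x + t *\<^sub>R \<nu>))) 0\<bar> + \<bar>(deriv ^^ j) (\<lambda>t. snd (v (x + t *\<^sub>R \<nu>))) 0\<bar>"
    unfolding dirderiv_def by (rule norm_pair_le)
  also have "\<dots> \<le> fact j * (1 / r) ^ j * (l1 N c1 * (2 * M) ^ (2 * N)) + fact j * (1 / r) ^ j * (l1 N c2 * (2 * M) ^ (2 * N))"
    using d1 d2 by linarith
  also have "\<dots> = fact j * (1 / r) ^ j * ((2 * M) ^ (2 * N) * (l1 N c1 + l1 N c2))"
    by (simp add: algebra_simps)
  finally show ?thesis by (simp add: M_def)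
qed

lemma dirderiv0: "dirderiv 0 d v x = v x"
  by (simp add: dirderiv_def)

lemma Tm_split: "Tm 0 m Mh \<nu> v x = v x + Tm 1 m Mh \<nu> v x"
  unfolding Tm_def by (simp add: sum.atLeast_Suc_atMost dirderiv0)

lemma Tm_bound:
  assumes dd: "\<And>j. norm (dirderiv j (\<nu> x) v x) \<le> fact j * (1 / r) ^ j * (W * S)"
    and r: "r > 0" and WS: "0 \<le> W * S"
  shows "norm (Tm j0 m Mh \<nu> v x) \<le> (\<Sum>j=j0..m. (norm (Mh x - x) / r) ^ j) * (W * S)"
proof -
  let ?d = "norm (Mh x - x)"
  have "norm (Tm j0 m Mh \<nu> v x) \<le> (\<Sum>j=j0..m. norm ((?d ^ j / fact j) *\<^sub>R dirderiv j (\<nu> x) v x))"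
    unfolding Tm_def by (rule norm_sum)
  also have "\<dots> \<le> (\<Sum>j=j0..m. (?d / r) ^ j * (W * S))"
  proof (rule sum_mono)
    fix j
    have "norm ((?d ^ j / fact j) *\<^sub>R dirderiv j (\<nu> x) v x) = (?d ^ j / fact j) * norm (dirderiv j (\<nu> x) v x)"
      by simp
    also have "\<dots> \<le> (?d ^ j / fact j) * (fact j * (1 / r) ^ j * (W * S))"
      by (rule mult_left_mono[OF dd]) simp
    also have "\<dots> = (?d / r) ^ j * (W * S)"
      by (simp add: power_divide)
    finally show "norm ((?d ^ j / fact j) *\<^sub>R dirderiv j (\<nu> x) v x) \<le> (?d / r) ^ j * (W * S)" .
  qed
  also have "\<dots> = (\<Sum>j=j0..m. (?d / r) ^ j) * (W * S)" by (simp add: sum_distrib_right)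
  finally show ?thesis .
qed


lemma final_step:
  assumes J1: "ennreal (lam * r\<^sup>2 * S1\<^sup>2) \<le> J" and J2: "ennreal (lam * r\<^sup>2 * S2\<^sup>2) \<le> J"
    and lam: "lam > 0" and r: "r > 0"
  shows "ennreal ((A * (S1 + S2))\<^sup>2) \<le> ennreal (4 * (A / r)\<^sup>2 / lam) * J"
proof -
  have "(A * (S1 + S2))\<^sup>2 \<le> 2 * A\<^sup>2 * (S1\<^sup>2 + S2\<^sup>2)"
  proof -
    have "(S1 + S2)\<^sup>2 \<le> 2 * (S1\<^sup>2 + S2\<^sup>2)" using sq_split[of "S1 + S2" S1] by (simp add: algebra_simps)
    then have le: "A\<^sup>2 * (S1 + S2)\<^sup>2 \<le> A\<^sup>2 * (2 * (S1\<^sup>2 + S2\<^sup>2))" by (intro mult_left_mono) auto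
    have "(A * (S1 + S2))\<^sup>2 = A\<^sup>2 * (S1 + S2)\<^sup>2" by (rule power_mult_distrib)
    also note le
    also have "A\<^sup>2 * (2 * (S1\<^sup>2 + S2\<^sup>2)) = 2 * A\<^sup>2 * (S1\<^sup>2 + S2\<^sup>2)" by (simp only: mult_ac)
    finally show ?thesis .
  qed
  then have "ennreal ((A * (S1 + S2))\<^sup>2) \<le> ennreal (2 * A\<^sup>2 * (S1\<^sup>2 + S2\<^sup>2))" by (rule ennreal_leI)
  also have "2 * A\<^sup>2 * (S1\<^sup>2 + S2\<^sup>2) = (2 * A\<^sup>2 / (lam * r\<^sup>2)) * (lam * r\<^sup>2 * S1\<^sup>2 + lam * r\<^sup>2 * S2\<^sup>2)"
    using lam r by (simp add: field_simps)
  also have "ennreal \<dots> = ennreal (2 * A\<^sup>2 / (lam * r\<^sup>2)) * (ennreal (lam * r\<^sup>2 * S1\<^sup>2) + ennreal (lam * r\<^sup>2 * S2\<^sup>2))"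
  proof -
    have X0: "0 \<le> 2 * A\<^sup>2 / (lam * r\<^sup>2)" using lam r by simp
    have Y1: "0 \<le> lam * r\<^sup>2 * S1\<^sup>2" using lam by simp
    have Y2: "0 \<le> lam * r\<^sup>2 * S2\<^sup>2" using lam by simp
    show ?thesis by (simp only: ennreal_mult[OF X0 add_nonneg_nonneg[OF Y1 Y2]] ennreal_plus[OF Y1 Y2])
  qed
  also have "\<dots> \<le> ennreal (2 * A\<^sup>2 / (lam * r\<^sup>2)) * (J + J)"
    by (intro mult_left_mono add_mono J1 J2) simp
  also have "\<dots> = ennreal (4 * (A / r)\<^sup>2 / lam) * J"
  proof -
    have "J + J = ennreal 2 * J" by (simp add: mult_2[symmetric])
    moreover have "ennreal (2 * A\<^sup>2 / (lam * r\<^sup>2)) * ennreal 2 = ennreal (4 * (A / r)\<^sup>2 / lam)"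
    proof -
      have "ennreal (2 * A\<^sup>2 / (lam * r\<^sup>2)) * ennreal 2 = ennreal (2 * A\<^sup>2 / (lam * r\<^sup>2) * 2)"
        by (rule ennreal_mult''[symmetric]) simp
      also have "2 * A\<^sup>2 / (lam * r\<^sup>2) * 2 = 4 * (A / r)\<^sup>2 / lam"
        using lam r by (simp add: power_divide field_simps)
      finally show ?thesis .
    qed
    ultimately show ?thesis by (simp add: mult.assoc[symmetric])
  qed
  finally show ?thesis .
qed

lemma sum_bedges:
  fixes g :: "pt set \<times> pt set \<Rightarrow> ennreal"
  assumes tri: "triangulation T" and g: "\<And>K e. (K, e) \<in> bedges T \<Longrightarrow> g (K, e) \<le> ennreal c * J K"
  shows "(\<Sum>p\<in>bedges T. g p) \<le> ennreal (9 * c) * (\<Sum>K\<in>T. J K)"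
proof -
  have fT: "finite T" using tri by (simp add: triangulation_def)
  have fe: "finite (edges K)" "card (edges K) \<le> 9" if "K \<in> T" for K
  proof -
    have "is_triangle K" using tri that by (simp add: triangulation_def)
    then obtain a b c where "K = convex hull {a, b, c}" unfolding is_triangle_def by blast
    then show "finite (edges K)" "card (edges K) \<le> 9" using edges_fin by blast+
  qed
  have fS: "finite (Sigma T edges)" using fT fe by (intro finite_SigmaI) auto
  have sub: "bedges T \<subseteq> Sigma T edges" unfolding bedges_def by auto
  have "(\<Sum>p\<in>bedges T. g p) \<le> (\<Sum>p\<in>bedges T. ennreal c * J (fst p))"
    by (rule sum_mono) (use g in auto)
  also have "\<dots> \<le> (\<Sum>p\<in>Sigma T edges. ennreal c * J (fst p))"
    by (rule sum_mono2[OF fS sub]) simp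
  also have "\<dots> = (\<Sum>K\<in>T. \<Sum>e\<in>edges K. ennreal c * J K)"
    by (subst sum.Sigma) (use fT fe in \<open>auto simp: case_prod_beta\<close>)
  also have "\<dots> = (\<Sum>K\<in>T. of_nat (card (edges K)) * (ennreal c * J K))"
    by simp
  also have "\<dots> \<le> (\<Sum>K\<in>T. 9 * (ennreal c * J K))"
  proof (rule sum_mono)
    fix K assume "K \<in> T"
    then have "of_nat (card (edges K)) \<le> (9 :: ennreal)" using fe(2)[of K] by (simp add: of_nat_le_iff[symmetric])
    then show "of_nat (card (edges K)) * (ennreal c * J K) \<le> 9 * (ennreal c * J K)"
      by (rule mult_right_mono) simp
  qed
  also have "\<dots> = (9 * ennreal c) * (\<Sum>K\<in>T. J K)"
    by (subst sum_distrib_left) (simp add: mult.assoc)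
  also have "9 * ennreal c = ennreal (9 * c)"
    by (cases "c \<ge> 0") (auto simp: ennreal_mult ennreal_neg)
  finally show ?thesis .
qed


theorem lemma4p4:
  fixes \<Omega> :: "pt set" and k m :: nat and \<sigma> \<rho> C\<delta> Cn :: real
  assumes "open \<Omega>" "connected \<Omega>" "bounded \<Omega>" "lipschitz_boundary \<Omega>" "k \<ge> 1"
  shows "\<exists>C. \<forall>\<T> Mh \<nu> V. admissible \<Omega> \<sigma> \<rho> C\<delta> Cn \<T> Mh \<nu> \<and> V \<in> Vh k \<T> \<longrightarrow>
     (\<Sum>(K, e)\<in>bedges \<T>. edge_int e (\<lambda>x. norm (Tm 1 m Mh \<nu> (V K) x) ^ 2 / diam K))
        \<le> ennreal C * (\<Sum>K\<in>\<T>. \<integral>\<^sup>+ x\<in>K. ennreal (norm (V K x) ^ 2) \<partial>lborel) \<and>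
     (\<Sum>(K, e)\<in>bedges \<T>. edge_int e (\<lambda>x. norm (Tm 0 m Mh \<nu> (V K) x) ^ 2 / diam K))
        \<le> ennreal (C / meshsize \<T> ^ 2) * (\<Sum>K\<in>\<T>. \<integral>\<^sup>+ x\<in>K. ennreal (norm (V K x) ^ 2) \<partial>lborel)"
proof -
  define N where "N = Suc k"
  obtain lam where lam: "lam > 0" "\<And>c. ennreal (lam * (l1 N c)\<^sup>2) \<le> GG N c" using NE[of N] by blast
  define D where "D = diameter (frontier \<Omega>)"
  have bF: "bounded (frontier \<Omega>)"
    using assms(3) by (rule bounded_subset[OF bounded_closure]) (simp add: frontier_closures)
  define \<sigma>a where "\<sigma>a = \<bar>\<sigma>\<bar>"
  define \<rho>a where "\<rho>a = \<bar>\<rho>\<bar>"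
  define Ca where "Ca = \<bar>C\<delta>\<bar>"
  define W where "W = (2 * (1 + 2 * \<sigma>a)) ^ (2 * N)"
  define H where "H = \<rho>a * \<sigma>a * D"
  define \<beta> where "\<beta> = Ca * (2 * \<rho>a * \<sigma>a)"
  define Z where "Z = real m * \<beta> * (1 + \<beta> * H) ^ m * W"
  define C1 where "C1 = 4 * Z\<^sup>2 * (2 * \<rho>a * \<sigma>a)\<^sup>2 / lam"
  define C2 where "C2 = 4 * (W + H * Z)\<^sup>2 * (2 * \<rho>a * \<sigma>a)\<^sup>2 / lam"
  have W0: "W \<ge> 0" by (simp add: W_def \<sigma>a_def)
  have D0: "D \<ge> 0" by (simp add: D_def diameter_ge_0[OF bF])
  have H0: "H \<ge> 0" by (simp add: H_def \<rho>a_def \<sigma>a_def D0)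
  have b0: "\<beta> \<ge> 0" by (simp add: \<beta>_def Ca_def \<rho>a_def \<sigma>a_def)
  have Z0: "Z \<ge> 0" using W0 H0 b0 by (simp add: Z_def)
  show ?thesis
  proof (rule exI[of _ "9 * max C1 C2"], intro allI impI)
    fix T Mh \<nu> V
    assume A: "admissible \<Omega> \<sigma> \<rho> C\<delta> Cn T Mh \<nu> \<and> V \<in> Vh k T"
    define h where "h = meshsize T"
    define J where "J K = (\<integral>\<^sup>+ x\<in>K. ennreal (norm (V K x) ^ 2) \<partial>lborel)" for K
    have tri: "triangulation T" and sr: "\<And>K. K \<in> T \<Longrightarrow> diam K \<le> \<sigma> * inradius K"
      and qu: "\<And>K. K \<in> T \<Longrightarrow> h \<le> \<rho> * diam K"
      and vb: "\<And>K v. K \<in> T \<Longrightarrow> v \<in> verts K \<Longrightarrow> v \<in> bdry_h T \<Longrightarrow> v \<in> frontier \<Omega>"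
      and bd: "\<And>x. x \<in> bdry_h T \<Longrightarrow> norm (\<nu> x) = 1 \<and> norm (Mh x - x) \<le> C\<delta> * h ^ 2"
      using A unfolding admissible_def h_def by blast+
    have RTV: "\<And>K. K \<in> T \<Longrightarrow> RT k (V K)" using A unfolding Vh_def by blast
    have PE: "edge_int e (\<lambda>x. norm (Tm 1 m Mh \<nu> (V K) x) ^ 2 / diam K) \<le> ennreal C1 * J K \<and>
              edge_int e (\<lambda>x. norm (Tm 0 m Mh \<nu> (V K) x) ^ 2 / diam K) \<le> ennreal (C2 / h\<^sup>2) * J K"
      if Ke: "(K, e) \<in> bedges T" for K e
    proof -
      have KT: "K \<in> T" and eK: "e \<in> edges K" and eb: "e \<subseteq> bdry_h T"
        using Ke unfolding bedges_def by auto
      have "is_triangle K" using tri KT by (simp add: triangulation_def)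
      then obtain a b c where nc: "\<not> collinear {a, b, c}" and Kh: "K = convex hull {a, b, c}"
        unfolding is_triangle_def by blast
      have bK: "bounded K" using Kh by (simp add: finite_imp_compact_convex_hull compact_imp_bounded)
      have cK: "convex K" using Kh by simp
      note IF = inr_facts[OF Kh nc sr[OF KT]]
      define r where "r = inradius K / 2"
      have r0: "r > 0" using IF(2) by (simp add: r_def)
      obtain x0 where x0: "cball x0 r \<subseteq> K" using IF(4) unfolding r_def by blast
      have x0K: "x0 \<in> K" using x0 r0 by auto
      have sp: "\<sigma> > 0" by (rule IF(3))
      have sa: "\<sigma>a = \<sigma>" using sp by (simp add: \<sigma>a_def)
      have dp: "diam K > 0" by (rule IF(1))
      have fT: "finite T" using tri by (simp add: triangulation_def)
      have hK: "diam K \<le> h" unfolding h_def meshsize_def using fT KT by simp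
      have hp: "h > 0" using hK dp by linarith
      have hr: "h \<le> \<rho> * diam K" by (rule qu[OF KT])
      have rp: "\<rho> > 0" using hr hp dp by (smt (verit) mult_nonpos_nonneg)
      have ra: "\<rho>a = \<rho>" using rp by (simp add: \<rho>a_def)
      have dr: "diam K \<le> 2 * \<sigma> * r" using sr[OF KT] by (simp add: r_def)
      have h2r: "h \<le> 2 * \<rho> * \<sigma> * r"
      proof -
        have "\<rho> * diam K \<le> \<rho> * (2 * \<sigma> * r)" using dr rp by (intro mult_left_mono) auto
        then show ?thesis using hr by (simp add: mult_ac)
      qed
      obtain a' b' where ab': "e = closed_segment a' b'" "a' \<in> verts K" "b' \<in> verts K" "a' \<noteq> b'"
        using eK unfolding edges_def by blast
      have "a' \<in> frontier \<Omega>" "b' \<in> frontier \<Omega>"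
        using vb[OF KT ab'(2)] vb[OF KT ab'(3)] eb ab'(1) by auto
      then have dab: "dist a' b' \<le> D" unfolding D_def by (rule diameter_bounded_bound[OF bF])
      have "2 * r \<le> dist a' b'" by (rule edge_len[OF nc Kh ab'(2-4) x0]) (use r0 in simp)
      then have "2 * r \<le> D" using dab by linarith
      then have "\<sigma> * (2 * r) \<le> \<sigma> * D" using sp by (intro mult_left_mono) auto
      moreover have "2 * \<sigma> * r = \<sigma> * (2 * r)" by simp
      ultimately have "diam K \<le> \<sigma> * D" using dr by linarith
      then have hH: "h \<le> H" using hr rp unfolding H_def sa ra
        by (smt (verit) mult.assoc mult_left_mono)
      have PN1: "PN N (\<lambda>x. fst (V K x))" and PN2: "PN N (\<lambda>x. snd (V K x))"
        using RT_PN[OF RTV[OF KT]] by (simp_all add: N_def)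
      obtain c1 where c1: "\<And>z. fst (V K (x0 + r *\<^sub>R z)) = ev N c1 z"
        using PN_affine[OF PN1, of x0 r] unfolding PN_def by blast
      obtain c2 where c2: "\<And>z. snd (V K (x0 + r *\<^sub>R z)) = ev N c2 z"
        using PN_affine[OF PN2, of x0 r] unfolding PN_def by blast
      have F1: "(fst (V K x))\<^sup>2 \<le> (norm (V K x))\<^sup>2" for x
        by (cases "V K x") (simp add: norm_Pair)
      have F2: "(snd (V K x))\<^sup>2 \<le> (norm (V K x))\<^sup>2" for x
        by (cases "V K x") (simp add: norm_Pair)
      have E1: "ennreal (lam * r\<^sup>2 * (l1 N c1)\<^sup>2) \<le> J K"
        unfolding J_def by (rule EB[OF lam c1 r0 x0 PN1 F1])
      have E2: "ennreal (lam * r\<^sup>2 * (l1 N c2)\<^sup>2) \<le> J K"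
        unfolding J_def by (rule EB[OF lam c2 r0 x0 PN2 F2])
      define S where "S = l1 N c1 + l1 N c2"
      have S0: "S \<ge> 0" by (simp add: S_def l1_def sum_nonneg)
      have pw1: "norm (Tm 1 m Mh \<nu> (V K) x) \<le> h * Z * S" and pw0: "norm (Tm 0 m Mh \<nu> (V K) x) \<le> (W + H * Z) * S"
        if xe: "x \<in> e" for x
      proof -
        have xb: "x \<in> bdry_h T" using xe eb by auto
        have nu: "norm (\<nu> x) = 1" and dl: "norm (Mh x - x) \<le> C\<delta> * h ^ 2" using bd[OF xb] by auto
        have xK: "x \<in> K" using edge_sub[OF eK cK] xe by auto
        have "norm (x - x0) \<le> diam K"
          using diameter_bounded_bound[OF bK xK x0K] by (simp add: diam_def dist_norm)
        then have xs: "norm (x - x0) \<le> 2 * \<sigma> * r" using dr by linarith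
        have dd: "norm (dirderiv j (\<nu> x) (V K) x) \<le> fact j * (1 / r) ^ j * (W * S)" for j
          using PW[OF c1 c2 r0 xs less_imp_le[OF sp] nu, of j] by (simp add: W_def S_def sa)
        have WS: "0 \<le> W * S" using W0 S0 by simp
        have T1: "norm (Tm 1 m Mh \<nu> (V K) x) \<le> (\<Sum>j=1..m. (norm (Mh x - x) / r) ^ j) * (W * S)"
          by (rule Tm_bound[where \<nu>=\<nu> and x=x and v="V K", OF dd r0 WS])
        have q0: "0 \<le> norm (Mh x - x) / r" using r0 by simp
        have qb: "norm (Mh x - x) / r \<le> \<beta> * h"
        proof -
          have "norm (Mh x - x) \<le> Ca * h\<^sup>2" using dl unfolding Ca_def
            by (smt (verit) abs_ge_self mult_right_mono zero_le_power2)
          then have "norm (Mh x - x) / r \<le> Ca * h\<^sup>2 / r" using r0 by (simp add: divide_right_mono)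
          also have "\<dots> \<le> \<beta> * h"
          proof -
            have "Ca * h\<^sup>2 = (Ca * h) * h" by (simp add: power2_eq_square)
            also have "\<dots> \<le> (Ca * h) * (2 * \<rho> * \<sigma> * r)"
              using h2r hp by (intro mult_left_mono) (auto simp: Ca_def)
            finally have "Ca * h\<^sup>2 \<le> (Ca * h) * (2 * \<rho> * \<sigma> * r)" .
            then show ?thesis using r0 unfolding \<beta>_def ra sa
              by (simp add: divide_le_eq mult_ac)
          qed
          finally show ?thesis .
        qed
        have G: "(\<Sum>j=1..m. (norm (Mh x - x) / r) ^ j) \<le> real m * (\<beta> * h) * (1 + \<beta> * H) ^ m"
          by (rule geo_bound[OF q0 qb b0 less_imp_le[OF hp] hH])
        have "norm (Tm 1 m Mh \<nu> (V K) x) \<le> (real m * (\<beta> * h) * (1 + \<beta> * H) ^ m) * (W * S)"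
          using T1 G WS by (meson mult_right_mono order.trans)
        also have "\<dots> = h * Z * S" by (simp add: Z_def mult_ac)
        finally show T1b: "norm (Tm 1 m Mh \<nu> (V K) x) \<le> h * Z * S" .
        have v0: "norm (V K x) \<le> W * S"
          using dd[of 0] by (simp add: dirderiv0)
        have "norm (Tm 0 m Mh \<nu> (V K) x) \<le> norm (V K x) + norm (Tm 1 m Mh \<nu> (V K) x)"
          unfolding Tm_split by (rule norm_triangle_ineq)
        also have "\<dots> \<le> W * S + h * Z * S" using v0 T1b by linarith
        also have "\<dots> \<le> W * S + H * Z * S"
          using hH Z0 S0 by (intro add_left_mono mult_right_mono) auto
        also have "\<dots> = (W + H * Z) * S" by (simp add: algebra_simps)
        finally show "norm (Tm 0 m Mh \<nu> (V K) x) \<le> (W + H * Z) * S" .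
      qed
      have I1: "edge_int e (\<lambda>x. norm (Tm 1 m Mh \<nu> (V K) x) ^ 2 / diam K) \<le> ennreal (diam K * ((h * Z * S)\<^sup>2 / diam K))"
      proof (rule edge_int_bound[OF eK bK edge_sub[OF eK cK]])
        fix x assume "x \<in> e"
        then have "norm (Tm 1 m Mh \<nu> (V K) x) ^ 2 \<le> (h * Z * S)\<^sup>2"
          using pw1 by (intro power_mono) auto
        then show "norm (Tm 1 m Mh \<nu> (V K) x) ^ 2 / diam K \<le> (h * Z * S)\<^sup>2 / diam K"
          using dp by (simp add: divide_right_mono)
      qed (use dp in simp)
      have I0: "edge_int e (\<lambda>x. norm (Tm 0 m Mh \<nu> (V K) x) ^ 2 / diam K) \<le> ennreal (diam K * (((W + H * Z) * S)\<^sup>2 / diam K))"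
      proof (rule edge_int_bound[OF eK bK edge_sub[OF eK cK]])
        fix x assume "x \<in> e"
        then have "norm (Tm 0 m Mh \<nu> (V K) x) ^ 2 \<le> ((W + H * Z) * S)\<^sup>2"
          using pw0 by (intro power_mono) auto
        then show "norm (Tm 0 m Mh \<nu> (V K) x) ^ 2 / diam K \<le> ((W + H * Z) * S)\<^sup>2 / diam K"
          using dp by (simp add: divide_right_mono)
      qed (use dp in simp)
      have fs1: "ennreal ((h * Z * (l1 N c1 + l1 N c2))\<^sup>2) \<le> ennreal (4 * (h * Z / r)\<^sup>2 / lam) * J K"
        by (rule final_step[OF E1 E2 lam(1) r0])
      have fs0: "ennreal (((W + H * Z) * (l1 N c1 + l1 N c2))\<^sup>2) \<le> ennreal (4 * ((W + H * Z) / r)\<^sup>2 / lam) * J K"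
        by (rule final_step[OF E1 E2 lam(1) r0])
      have hr2: "h / r \<le> 2 * \<rho> * \<sigma>" using h2r r0 by (simp add: divide_le_eq mult_ac)
      have ineq1: "4 * (h * Z / r)\<^sup>2 / lam \<le> C1"
      proof -
        have "(h * Z / r)\<^sup>2 = Z\<^sup>2 * (h / r)\<^sup>2" by (simp add: power_mult_distrib power_divide)
        also have "\<dots> \<le> Z\<^sup>2 * (2 * \<rho> * \<sigma>)\<^sup>2"
          using hr2 hp r0 by (intro mult_left_mono power_mono) auto
        finally show ?thesis using lam(1) unfolding C1_def ra sa by (simp add: divide_right_mono)
      qed
      have ineq0: "4 * ((W + H * Z) / r)\<^sup>2 / lam \<le> C2 / h\<^sup>2"
      proof -
        have "1 / r \<le> 2 * \<rho> * \<sigma> / h" using hr2 hp r0 by (simp add: field_simps)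
        then have "(1 / r)\<^sup>2 \<le> (2 * \<rho> * \<sigma> / h)\<^sup>2" using r0 by (intro power_mono) auto
        then have le1: "(W + H * Z)\<^sup>2 * (1 / r)\<^sup>2 \<le> (W + H * Z)\<^sup>2 * (2 * \<rho> * \<sigma> / h)\<^sup>2"
          by (rule mult_left_mono) simp
        have "((W + H * Z) / r)\<^sup>2 = (W + H * Z)\<^sup>2 * (1 / r)\<^sup>2" by (simp add: power_divide)
        with le1 have "((W + H * Z) / r)\<^sup>2 \<le> (W + H * Z)\<^sup>2 * (2 * \<rho> * \<sigma> / h)\<^sup>2" by simp
        then have "4 * ((W + H * Z) / r)\<^sup>2 / lam \<le> 4 * ((W + H * Z)\<^sup>2 * (2 * \<rho> * \<sigma> / h)\<^sup>2) / lam"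
          using lam(1) by (simp add: divide_right_mono)
        also have "\<dots> = C2 / h\<^sup>2" unfolding C2_def ra sa using hp by (simp add: power_divide field_simps)
        finally show ?thesis .
      qed
      have "edge_int e (\<lambda>x. norm (Tm 1 m Mh \<nu> (V K) x) ^ 2 / diam K) \<le> ennreal ((h * Z * S)\<^sup>2)"
        using I1 dp by simp
      also have "\<dots> \<le> ennreal (4 * (h * Z / r)\<^sup>2 / lam) * J K" using fs1 by (simp add: S_def)
      also have "\<dots> \<le> ennreal C1 * J K" by (intro mult_right_mono ennreal_leI ineq1) simp
      finally have P1: "edge_int e (\<lambda>x. norm (Tm 1 m Mh \<nu> (V K) x) ^ 2 / diam K) \<le> ennreal C1 * J K" .
      have "edge_int e (\<lambda>x. norm (Tm 0 m Mh \<nu> (V K) x) ^ 2 / diam K) \<le> ennreal (((W + H * Z) * S)\<^sup>2)"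
        using I0 dp by simp
      also have "\<dots> \<le> ennreal (4 * ((W + H * Z) / r)\<^sup>2 / lam) * J K" using fs0 by (simp add: S_def)
      also have "\<dots> \<le> ennreal (C2 / h\<^sup>2) * J K" by (intro mult_right_mono ennreal_leI ineq0) simp
      finally have P0: "edge_int e (\<lambda>x. norm (Tm 0 m Mh \<nu> (V K) x) ^ 2 / diam K) \<le> ennreal (C2 / h\<^sup>2) * J K" .
      show ?thesis using P1 P0 by blast
    qed
    have S1: "(\<Sum>(K, e)\<in>bedges T. edge_int e (\<lambda>x. norm (Tm 1 m Mh \<nu> (V K) x) ^ 2 / diam K)) \<le> ennreal (9 * C1) * (\<Sum>K\<in>T. J K)"
      by (rule sum_bedges[OF tri]) (use PE in auto)
    have S0: "(\<Sum>(K, e)\<in>bedges T. edge_int e (\<lambda>x. norm (Tm 0 m Mh \<nu> (V K) x) ^ 2 / diam K)) \<le> ennreal (9 * (C2 / h\<^sup>2)) * (\<Sum>K\<in>T. J K)"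
      by (rule sum_bedges[OF tri]) (use PE in auto)
    have "ennreal (9 * C1) \<le> ennreal (9 * max C1 C2)" by (intro ennreal_leI) simp
    then have R1: "ennreal (9 * C1) * (\<Sum>K\<in>T. J K) \<le> ennreal (9 * max C1 C2) * (\<Sum>K\<in>T. J K)"
      by (rule mult_right_mono) simp
    have "ennreal (9 * (C2 / h\<^sup>2)) \<le> ennreal (9 * max C1 C2 / h\<^sup>2)"
      by (intro ennreal_leI) (simp add: divide_right_mono)
    then have R0: "ennreal (9 * (C2 / h\<^sup>2)) * (\<Sum>K\<in>T. J K) \<le> ennreal (9 * max C1 C2 / h\<^sup>2) * (\<Sum>K\<in>T. J K)"
      by (rule mult_right_mono) simp
    show "(\<Sum>(K, e)\<in>bedges T. edge_int e (\<lambda>x. norm (Tm 1 m Mh \<nu> (V K) x) ^ 2 / diam K))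
        \<le> ennreal (9 * max C1 C2) * (\<Sum>K\<in>T. \<integral>\<^sup>+ x\<in>K. ennreal (norm (V K x) ^ 2) \<partial>lborel) \<and>
     (\<Sum>(K, e)\<in>bedges T. edge_int e (\<lambda>x. norm (Tm 0 m Mh \<nu> (V K) x) ^ 2 / diam K))
        \<le> ennreal (9 * max C1 C2 / meshsize T ^ 2) * (\<Sum>K\<in>T. \<integral>\<^sup>+ x\<in>K. ennreal (norm (V K x) ^ 2) \<partial>lborel)"
      using order.trans[OF S1 R1] order.trans[OF S0 R0] unfolding J_def h_def by blast
  qed
qed


end
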